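(* Let $I$ be a finite category with a degree function $|\cdot|:\mathrm{Ob}(I)\to\{0,1\}$ such that $|i|<|j|$ for every non-identity morphism $u:i\to j$, and let $\mathcal{C}:I\to\mathsf{Cat}$ be a functor such that each $\mathcal{C}_i=\mathcal{C}(i)$ is a P-category $(\mathcal{C}_i,P,\mathcal{F}_i,\mathcal{W}_i)$ and each $u_*=\mathcal{C}(u):\mathcal{C}_i\to\mathcal{C}_j$ preserves path objects, fibrations, weak equivalences and fibre products. Then the diagram category $\Gamma\mathcal{C}$ is a P-category with path objects, fibrations, weak equivalences and fibre products defined level-wise.
   Context: $\Gamma\mathcal{C}$: objects are families $A_i\in\mathcal{C}_i$ ($i\in I$) with comparison morphisms $\varphi_u:u_*(A_i)\to A_j$ for $u:i\to j$; morphisms $f:A\to B$ are families $f_i:A_i\to B_i$ with $f_j\varphi_u=\varphi_uu_*(f_i)$. Level-wise path: $P(A)=(P(A_i),P(\varphi_u))$ with level-wise $\iota$, $\delta^k$ (and level-wise symmetry, coproduct, interchange, folding map). P-category: a category with finite products and final object $e$, a functorial path $P$ ($\iota:1\to P$, $\delta^0,\delta^1:P\to1$, $\delta^k\iota=1$) equipped with natural transformations $\tau:P\to P$, $c:P\to P^2$, $\mu:P^2\to P^2$, $\nabla:P^2\to P$ with $\tau\tau=1,\tau\iota=\iota,\delta^k\tau=\delta^{1-k}$; $c_{P(A)}c_A=P(c_A)c_A$, $\delta^1_{P(A)}c_A=P(\delta^1_A)c_A=1$, $c_A\iota_A=\iota_{P(A)}\iota_A$, $\delta^0_{P(A)}c_A=P(\delta^0_A)c_A=\iota_A\delta^0_A$;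 $\mu$ invertible, $\delta^k_{P(A)}\mu_A=P(\delta^k_A)$, $P(\delta^k_A)\mu_A=\delta^k_{P(A)}$; $\delta^k\nabla=\delta^k\delta^k_P$, $\nabla\iota_P=1$; and classes $\mathcal{F}$ (fibrations), $\mathcal{W}$ (weak equivalences) with: (P$_1$) both contain isomorphisms, closed under composition, $\mathcal{W}$ 2-out-of-3, $A\to e$ fibrations; (P$_2$) $\iota_A\in\mathcal{W}$, $(\delta^0,\delta^1):P(A)\to A\times A$ fibration, $\delta^k$ trivial fibrations; (P$_3$) for $u:A\to C$ and a fibration $v:B\to C$, $A\times_CB$ exists, $\pi_1$ is a fibration, trivial if $v$ is, and $\pi_2$ is a weak equivalence if $u$ is; (P$_4$) $P$ preserves fibrations, weak equivalences and fibre products; (P$_5$) for each fibration $v:A\to B$, $((\delta^0_A,\delta^1_A),P(v)):P(A)\to(A\times A)\times_{B\times B}P(B)$ is a fibration. *)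

theory Defs
  imports Main
begin

text \<open>A category with objects of type 'o and morphisms of type 'm.
  Comp C g f is the composite g after f.\<close>

record ('o,'m) cat =
  Obj  :: "'o set"
  Arr  :: "'m set"
  Dom  :: "'m \<Rightarrow> 'o"
  Cod  :: "'m \<Rightarrow> 'o"
  Idm  :: "'o \<Rightarrow> 'm"
  Comp :: "'m \<Rightarrow> 'm \<Rightarrow> 'm"

definition hom :: "('o,'m) cat \<Rightarrow> 'o \<Rightarrow> 'o \<Rightarrow> 'm set" where
  "hom C A B = {f \<in> Arr C. Dom C f = A \<and> Cod C f = B}"

definition is_category :: "('o,'m) cat \<Rightarrow> bool" where
  "is_category C \<longleftrightarrow>
     (\<forall>f\<in>Arr C. Dom C f \<in> Obj C \<and> Cod C f \<in> Obj C) \<and>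
     (\<forall>A\<in>Obj C. Idm C A \<in> hom C A A) \<and>
     (\<forall>f g. f \<in> Arr C \<and> g \<in> Arr C \<and> Cod C f = Dom C g \<longrightarrow>
        Comp C g f \<in> hom C (Dom C f) (Cod C g)) \<and>
     (\<forall>f\<in>Arr C. Comp C f (Idm C (Dom C f)) = f \<and> Comp C (Idm C (Cod C f)) f = f) \<and>
     (\<forall>f g h. f \<in> Arr C \<and> g \<in> Arr C \<and> h \<in> Arr C \<and> Cod C f = Dom C g \<and> Cod C g = Dom C h \<longrightarrow>
        Comp C h (Comp C g f) = Comp C (Comp C h g) f)"

definition is_functor ::
  "('o,'m) cat \<Rightarrow> ('p,'n) cat \<Rightarrow> ('o \<Rightarrow> 'p) \<Rightarrow> ('m \<Rightarrow> 'n) \<Rightarrow> bool" where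
  "is_functor C D Fo Fm \<longleftrightarrow>
     (\<forall>A\<in>Obj C. Fo A \<in> Obj D) \<and>
     (\<forall>f\<in>Arr C. Fm f \<in> hom D (Fo (Dom C f)) (Fo (Cod C f))) \<and>
     (\<forall>A\<in>Obj C. Fm (Idm C A) = Idm D (Fo A)) \<and>
     (\<forall>f g. f \<in> Arr C \<and> g \<in> Arr C \<and> Cod C f = Dom C g \<longrightarrow>
        Fm (Comp C g f) = Comp D (Fm g) (Fm f))"

definition nat_trans ::
  "('o,'m) cat \<Rightarrow> ('o \<Rightarrow> 'o) \<Rightarrow> ('m \<Rightarrow> 'm) \<Rightarrow> ('o \<Rightarrow> 'o) \<Rightarrow> ('m \<Rightarrow> 'm) \<Rightarrow> ('o \<Rightarrow> 'm) \<Rightarrow> bool" where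
  "nat_trans C Fo Fm Go Gm eta \<longleftrightarrow>
     (\<forall>A\<in>Obj C. eta A \<in> hom C (Fo A) (Go A)) \<and>
     (\<forall>f\<in>Arr C. Comp C (Gm f) (eta (Dom C f)) = Comp C (eta (Cod C f)) (Fm f))"

definition is_iso :: "('o,'m) cat \<Rightarrow> 'm \<Rightarrow> bool" where
  "is_iso C f \<longleftrightarrow> f \<in> Arr C \<and>
     (\<exists>g\<in>hom C (Cod C f) (Dom C f). Comp C g f = Idm C (Dom C f) \<and> Comp C f g = Idm C (Cod C f))"

definition is_terminal :: "('o,'m) cat \<Rightarrow> 'o \<Rightarrow> bool" where
  "is_terminal C e \<longleftrightarrow> e \<in> Obj C \<and> (\<forall>A\<in>Obj C. \<exists>!t. t \<in> hom C A e)"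

definition is_product :: "('o,'m) cat \<Rightarrow> 'o \<Rightarrow> 'o \<Rightarrow> 'o \<Rightarrow> 'm \<Rightarrow> 'm \<Rightarrow> bool" where
  "is_product C A B X p1 p2 \<longleftrightarrow> X \<in> Obj C \<and> p1 \<in> hom C X A \<and> p2 \<in> hom C X B \<and>
     (\<forall>Z\<in>Obj C. \<forall>f\<in>hom C Z A. \<forall>g\<in>hom C Z B.
        \<exists>!h. h \<in> hom C Z X \<and> Comp C p1 h = f \<and> Comp C p2 h = g)"

definition has_finite_products :: "('o,'m) cat \<Rightarrow> bool" where
  "has_finite_products C \<longleftrightarrow> (\<exists>e. is_terminal C e) \<and>
     (\<forall>A\<in>Obj C. \<forall>B\<in>Obj C. \<exists>X p1 p2. is_product C A B X p1 p2)"

definition is_pullback :: "('o,'m) cat \<Rightarrow> 'm \<Rightarrow> 'm \<Rightarrow> 'o \<Rightarrow> 'm \<Rightarrow> 'm \<Rightarrow> bool" where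
  "is_pullback C u v Q q1 q2 \<longleftrightarrow>
     u \<in> Arr C \<and> v \<in> Arr C \<and> Cod C u = Cod C v \<and> Q \<in> Obj C \<and>
     q1 \<in> hom C Q (Dom C u) \<and> q2 \<in> hom C Q (Dom C v) \<and> Comp C u q1 = Comp C v q2 \<and>
     (\<forall>Z\<in>Obj C. \<forall>f\<in>hom C Z (Dom C u). \<forall>g\<in>hom C Z (Dom C v).
        Comp C u f = Comp C v g \<longrightarrow>
        (\<exists>!h. h \<in> hom C Z Q \<and> Comp C q1 h = f \<and> Comp C q2 h = g))"

record ('o,'m) pstruct =
  PO    :: "'o \<Rightarrow> 'o"
  PM    :: "'m \<Rightarrow> 'm"
  iota  :: "'o \<Rightarrow> 'm"
  dl0   :: "'o \<Rightarrow> 'm"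
  dl1   :: "'o \<Rightarrow> 'm"
  tau   :: "'o \<Rightarrow> 'm"
  cc    :: "'o \<Rightarrow> 'm"
  mu    :: "'o \<Rightarrow> 'm"
  nabla :: "'o \<Rightarrow> 'm"
  Fib   :: "'m set"
  WE    :: "'m set"

definition is_Pcat :: "('o,'m) cat \<Rightarrow> ('o,'m) pstruct \<Rightarrow> bool" where
  "is_Pcat C S \<longleftrightarrow>
   (let P = PO S; Pm = PM S; cmp = Comp C; one = Idm C;
        P2 = (\<lambda>A. P (P A)); Pm2 = (\<lambda>f. Pm (Pm f)) in
     is_category C \<and> has_finite_products C \<and> is_functor C C P Pm \<and>
     \<comment> \<open>path structure\<close>
     nat_trans C id id P Pm (iota S) \<and>
     nat_trans C P Pm id id (dl0 S) \<and> nat_trans C P Pm id id (dl1 S) \<and>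
     (\<forall>A\<in>Obj C. cmp (dl0 S A) (iota S A) = one A \<and> cmp (dl1 S A) (iota S A) = one A) \<and>
     \<comment> \<open>symmetry tau\<close>
     nat_trans C P Pm P Pm (tau S) \<and>
     (\<forall>A\<in>Obj C. cmp (tau S A) (tau S A) = one (P A) \<and> cmp (tau S A) (iota S A) = iota S A \<and>
        cmp (dl0 S A) (tau S A) = dl1 S A \<and> cmp (dl1 S A) (tau S A) = dl0 S A) \<and>
     \<comment> \<open>coproduct c\<close>
     nat_trans C P Pm P2 Pm2 (cc S) \<and>
     (\<forall>A\<in>Obj C.
        cmp (cc S (P A)) (cc S A) = cmp (Pm (cc S A)) (cc S A) \<and>
        cmp (dl1 S (P A)) (cc S A) = one (P A) \<and> cmp (Pm (dl1 S A)) (cc S A) = one (P A) \<and>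
        cmp (cc S A) (iota S A) = cmp (iota S (P A)) (iota S A) \<and>
        cmp (dl0 S (P A)) (cc S A) = cmp (iota S A) (dl0 S A) \<and>
        cmp (Pm (dl0 S A)) (cc S A) = cmp (iota S A) (dl0 S A)) \<and>
     \<comment> \<open>interchange mu\<close>
     nat_trans C P2 Pm2 P2 Pm2 (mu S) \<and>
     (\<forall>A\<in>Obj C. is_iso C (mu S A) \<and>
        cmp (dl0 S (P A)) (mu S A) = Pm (dl0 S A) \<and> cmp (dl1 S (P A)) (mu S A) = Pm (dl1 S A) \<and>
        cmp (Pm (dl0 S A)) (mu S A) = dl0 S (P A) \<and> cmp (Pm (dl1 S A)) (mu S A) = dl1 S (P A)) \<and>
     \<comment> \<open>folding map nabla\<close>
     nat_trans C P2 Pm2 P Pm (nabla S) \<and>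
     (\<forall>A\<in>Obj C.
        cmp (dl0 S A) (nabla S A) = cmp (dl0 S A) (dl0 S (P A)) \<and>
        cmp (dl1 S A) (nabla S A) = cmp (dl1 S A) (dl1 S (P A)) \<and>
        cmp (nabla S A) (iota S (P A)) = one (P A)) \<and>
     \<comment> \<open>(P1)\<close>
     Fib S \<subseteq> Arr C \<and> WE S \<subseteq> Arr C \<and>
     (\<forall>f. is_iso C f \<longrightarrow> f \<in> Fib S \<and> f \<in> WE S) \<and>
     (\<forall>f g. f \<in> Fib S \<and> g \<in> Fib S \<and> Cod C f = Dom C g \<longrightarrow> cmp g f \<in> Fib S) \<and>
     (\<forall>f g. f \<in> WE S \<and> g \<in> WE S \<and> Cod C f = Dom C g \<longrightarrow> cmp g f \<in> WE S) \<and>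
     (\<forall>f g. f \<in> Arr C \<and> g \<in> Arr C \<and> Cod C f = Dom C g \<longrightarrow>
        (f \<in> WE S \<and> cmp g f \<in> WE S \<longrightarrow> g \<in> WE S) \<and>
        (g \<in> WE S \<and> cmp g f \<in> WE S \<longrightarrow> f \<in> WE S)) \<and>
     (\<forall>e. is_terminal C e \<longrightarrow> (\<forall>A\<in>Obj C. \<forall>t\<in>hom C A e. t \<in> Fib S)) \<and>
     \<comment> \<open>(P2)\<close>
     (\<forall>A\<in>Obj C. iota S A \<in> WE S \<and>
        dl0 S A \<in> Fib S \<and> dl0 S A \<in> WE S \<and> dl1 S A \<in> Fib S \<and> dl1 S A \<in> WE S \<and>
        (\<forall>X p1 p2. is_product C A A X p1 p2 \<longrightarrow>
           (\<forall>h\<in>hom C (P A) X. cmp p1 h = dl0 S A \<and> cmp p2 h = dl1 S A \<longrightarrow> h \<in> Fib S))) \<and>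
     \<comment> \<open>(P3)\<close>
     (\<forall>u v. u \<in> Arr C \<and> v \<in> Fib S \<and> Cod C u = Cod C v \<longrightarrow>
        (\<exists>Q q1 q2. is_pullback C u v Q q1 q2) \<and>
        (\<forall>Q q1 q2. is_pullback C u v Q q1 q2 \<longrightarrow>
           q1 \<in> Fib S \<and> (v \<in> WE S \<longrightarrow> q1 \<in> WE S) \<and> (u \<in> WE S \<longrightarrow> q2 \<in> WE S))) \<and>
     \<comment> \<open>(P4)\<close>
     (\<forall>f\<in>Fib S. Pm f \<in> Fib S) \<and> (\<forall>f\<in>WE S. Pm f \<in> WE S) \<and>
     (\<forall>u v Q q1 q2. v \<in> Fib S \<and> is_pullback C u v Q q1 q2 \<longrightarrow>
        is_pullback C (Pm u) (Pm v) (P Q) (Pm q1) (Pm q2)) \<and>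
     \<comment> \<open>(P5)\<close>
     (\<forall>v\<in>Fib S. \<forall>AA a1 a2 BB b1 b2 w h Q q1 q2 k.
        is_product C (Dom C v) (Dom C v) AA a1 a2 \<and>
        is_product C (Cod C v) (Cod C v) BB b1 b2 \<and>
        w \<in> hom C AA BB \<and> cmp b1 w = cmp v a1 \<and> cmp b2 w = cmp v a2 \<and>
        h \<in> hom C (P (Cod C v)) BB \<and> cmp b1 h = dl0 S (Cod C v) \<and> cmp b2 h = dl1 S (Cod C v) \<and>
        is_pullback C w h Q q1 q2 \<and>
        k \<in> hom C (P (Dom C v)) Q \<and>
        cmp a1 (cmp q1 k) = dl0 S (Dom C v) \<and> cmp a2 (cmp q1 k) = dl1 S (Dom C v) \<and>
        cmp q2 k = Pm v
        \<longrightarrow> k \<in> Fib S))"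

definition preserves_paths ::
  "('o,'m) cat \<Rightarrow> ('o,'m) pstruct \<Rightarrow> ('o,'m) pstruct \<Rightarrow> ('o \<Rightarrow> 'o) \<Rightarrow> ('m \<Rightarrow> 'm) \<Rightarrow> bool" where
  "preserves_paths C S T Fo Fm \<longleftrightarrow>
     (\<forall>A\<in>Obj C. Fo (PO S A) = PO T (Fo A) \<and>
        Fm (iota S A) = iota T (Fo A) \<and> Fm (dl0 S A) = dl0 T (Fo A) \<and> Fm (dl1 S A) = dl1 T (Fo A) \<and>
        Fm (tau S A) = tau T (Fo A) \<and> Fm (cc S A) = cc T (Fo A) \<and>
        Fm (mu S A) = mu T (Fo A) \<and> Fm (nabla S A) = nabla T (Fo A)) \<and>
     (\<forall>f\<in>Arr C. Fm (PM S f) = PM T (Fm f))"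

definition preserves_fib_we ::
  "('o,'m) pstruct \<Rightarrow> ('o,'m) pstruct \<Rightarrow> ('m \<Rightarrow> 'm) \<Rightarrow> bool" where
  "preserves_fib_we S T Fm \<longleftrightarrow> (\<forall>f\<in>Fib S. Fm f \<in> Fib T) \<and> (\<forall>f\<in>WE S. Fm f \<in> WE T)"

text \<open>Preservation of the fibre products of axiom (P3), i.e. pullbacks along fibrations.\<close>
definition preserves_fibre_products ::
  "('o,'m) cat \<Rightarrow> ('o,'m) pstruct \<Rightarrow> ('o,'m) cat \<Rightarrow> ('o \<Rightarrow> 'o) \<Rightarrow> ('m \<Rightarrow> 'm) \<Rightarrow> bool" where
  "preserves_fibre_products C S D Fo Fm \<longleftrightarrow>
     (\<forall>u v Q q1 q2. v \<in> Fib S \<and> is_pullback C u v Q q1 q2 \<longrightarrow>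
        is_pullback D (Fm u) (Fm v) (Fo Q) (Fm q1) (Fm q2))"

type_synonym ('i,'u,'o,'m) gobj = "('i \<Rightarrow> 'o) \<times> ('u \<Rightarrow> 'm)"
type_synonym ('i,'u,'o,'m) gmor = "('i,'u,'o,'m) gobj \<times> ('i,'u,'o,'m) gobj \<times> ('i \<Rightarrow> 'm)"

definition lw :: "'a set \<Rightarrow> ('a \<Rightarrow> 'b) \<Rightarrow> 'a \<Rightarrow> 'b" where
  "lw X f = (\<lambda>x. if x \<in> X then f x else undefined)"

text \<open>Objects: families A_i with comparison maps phi_u : u_*(A_i) -> A_j (u : i -> j);
  extensional outside Ob(I), Mor(I).\<close>
definition Gamma_obj ::
  "('i,'u) cat \<Rightarrow> ('i \<Rightarrow> ('o,'m) cat) \<Rightarrow> ('u \<Rightarrow> 'o \<Rightarrow> 'o) \<Rightarrow> ('i,'u,'o,'m) gobj set" where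
  "Gamma_obj I C Fo = {(A, phi).
      (\<forall>i\<in>Obj I. A i \<in> Obj (C i)) \<and> (\<forall>i. i \<notin> Obj I \<longrightarrow> A i = undefined) \<and>
      (\<forall>u\<in>Arr I. phi u \<in> hom (C (Cod I u)) (Fo u (A (Dom I u))) (A (Cod I u))) \<and>
      (\<forall>u. u \<notin> Arr I \<longrightarrow> phi u = undefined)}"

definition Gamma_arr ::
  "('i,'u) cat \<Rightarrow> ('i \<Rightarrow> ('o,'m) cat) \<Rightarrow> ('u \<Rightarrow> 'o \<Rightarrow> 'o) \<Rightarrow> ('u \<Rightarrow> 'm \<Rightarrow> 'm)
     \<Rightarrow> ('i,'u,'o,'m) gmor set" where
  "Gamma_arr I C Fo Fm = {(X, Y, f).
      X \<in> Gamma_obj I C Fo \<and> Y \<in> Gamma_obj I C Fo \<and>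
      (\<forall>i\<in>Obj I. f i \<in> hom (C i) (fst X i) (fst Y i)) \<and>
      (\<forall>i. i \<notin> Obj I \<longrightarrow> f i = undefined) \<and>
      (\<forall>u\<in>Arr I. Comp (C (Cod I u)) (f (Cod I u)) (snd X u) =
                  Comp (C (Cod I u)) (snd Y u) (Fm u (f (Dom I u))))}"

definition Gamma ::
  "('i,'u) cat \<Rightarrow> ('i \<Rightarrow> ('o,'m) cat) \<Rightarrow> ('u \<Rightarrow> 'o \<Rightarrow> 'o) \<Rightarrow> ('u \<Rightarrow> 'm \<Rightarrow> 'm)
     \<Rightarrow> (('i,'u,'o,'m) gobj, ('i,'u,'o,'m) gmor) cat" where
  "Gamma I C Fo Fm =
     \<lparr> Obj = Gamma_obj I C Fo,
       Arr = Gamma_arr I C Fo Fm,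
       Dom = (\<lambda>(X, Y, f). X),
       Cod = (\<lambda>(X, Y, f). Y),
       Idm = (\<lambda>X. (X, X, lw (Obj I) (\<lambda>i. Idm (C i) (fst X i)))),
       Comp = (\<lambda>(Y', Z, g) (X, Y, f). (X, Z, lw (Obj I) (\<lambda>i. Comp (C i) (g i) (f i)))) \<rparr>"

definition gP_obj ::
  "('i,'u) cat \<Rightarrow> ('i \<Rightarrow> ('o,'m) pstruct) \<Rightarrow> ('i,'u,'o,'m) gobj \<Rightarrow> ('i,'u,'o,'m) gobj" where
  "gP_obj I S X = (lw (Obj I) (\<lambda>i. PO (S i) (fst X i)),
                   lw (Arr I) (\<lambda>u. PM (S (Cod I u)) (snd X u)))"

definition Gamma_P ::
  "('i,'u) cat \<Rightarrow> ('i \<Rightarrow> ('o,'m) cat) \<Rightarrow> ('u \<Rightarrow> 'o \<Rightarrow> 'o) \<Rightarrow> ('u \<Rightarrow> 'm \<Rightarrow> 'm)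
     \<Rightarrow> ('i \<Rightarrow> ('o,'m) pstruct) \<Rightarrow> (('i,'u,'o,'m) gobj, ('i,'u,'o,'m) gmor) pstruct" where
  "Gamma_P I C Fo Fm S =
    (let P = gP_obj I S in
     \<lparr> PO = P,
       PM = (\<lambda>(X, Y, f). (P X, P Y, lw (Obj I) (\<lambda>i. PM (S i) (f i)))),
       iota = (\<lambda>X. (X, P X, lw (Obj I) (\<lambda>i. iota (S i) (fst X i)))),
       dl0 = (\<lambda>X. (P X, X, lw (Obj I) (\<lambda>i. dl0 (S i) (fst X i)))),
       dl1 = (\<lambda>X. (P X, X, lw (Obj I) (\<lambda>i. dl1 (S i) (fst X i)))),
       tau = (\<lambda>X. (P X, P X, lw (Obj I) (\<lambda>i. tau (S i) (fst X i)))),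
       cc = (\<lambda>X. (P X, P (P X), lw (Obj I) (\<lambda>i. cc (S i) (fst X i)))),
       mu = (\<lambda>X. (P (P X), P (P X), lw (Obj I) (\<lambda>i. mu (S i) (fst X i)))),
       nabla = (\<lambda>X. (P (P X), P X, lw (Obj I) (\<lambda>i. nabla (S i) (fst X i)))),
       Fib = {F \<in> Gamma_arr I C Fo Fm. \<forall>i\<in>Obj I. snd (snd F) i \<in> Fib (S i)},
       WE = {F \<in> Gamma_arr I C Fo Fm. \<forall>i\<in>Obj I. snd (snd F) i \<in> WE (S i)} \<rparr>)"

end

theory Submission
  imports Defs
begin


lemma hom_iff: "f \<in> hom C A B \<longleftrightarrow> f \<in> Arr C \<and> Dom C f = A \<and> Cod C f = B"
  by (simp add: hom_def)

lemma lw_in[simp]: "x \<in> X \<Longrightarrow> lw X f x = f x" by (simp add: lw_def)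
lemma lw_out[simp]: "x \<notin> X \<Longrightarrow> lw X f x = undefined" by (simp add: lw_def)
lemma lw_cong[cong]: "X = Y \<Longrightarrow> (\<And>x. x \<in> Y =simp=> f x = g x) \<Longrightarrow> lw X f = lw Y g"
  by (auto simp: lw_def simp_implies_def)
lemma lw_eqI: "(\<And>x. x \<in> X \<Longrightarrow> f x = h x) \<Longrightarrow> (\<And>x. x \<notin> X \<Longrightarrow> h x = undefined) \<Longrightarrow> lw X f = h"
  by (auto simp: lw_def)
lemma lw_cong2: "(\<And>x. x \<in> X \<Longrightarrow> f x = g x) \<Longrightarrow> lw X f = lw X g"
  by (auto simp: lw_def)
lemma lw_ext: "(\<And>x. x \<notin> X \<Longrightarrow> f x = undefined) \<Longrightarrow> lw X f = f"
  by (auto simp: lw_def)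

locale category =
  fixes C :: "('o,'m) cat"
  assumes is_cat: "is_category C"
begin

lemma dom_obj: "f \<in> Arr C \<Longrightarrow> Dom C f \<in> Obj C"
  using is_cat by (simp add: is_category_def)
lemma cod_obj: "f \<in> Arr C \<Longrightarrow> Cod C f \<in> Obj C"
  using is_cat by (simp add: is_category_def)
lemma hom_dom: "f \<in> hom C A B \<Longrightarrow> A \<in> Obj C"
  using dom_obj by (auto simp: hom_iff)
lemma hom_cod: "f \<in> hom C A B \<Longrightarrow> B \<in> Obj C"
  using cod_obj by (auto simp: hom_iff)
lemma id_hom: "A \<in> Obj C \<Longrightarrow> Idm C A \<in> hom C A A"
  using is_cat by (simp add: is_category_def)
lemma comp_hom: "f \<in> hom C A B \<Longrightarrow> g \<in> hom C B D \<Longrightarrow> Comp C g f \<in> hom C A D"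
  using is_cat unfolding is_category_def hom_iff by metis
lemma id_right: "f \<in> hom C A B \<Longrightarrow> Comp C f (Idm C A) = f"
  using is_cat unfolding is_category_def hom_iff by metis
lemma id_left: "f \<in> hom C A B \<Longrightarrow> Comp C (Idm C B) f = f"
  using is_cat unfolding is_category_def hom_iff by metis
lemma assoc: "f \<in> hom C A B \<Longrightarrow> g \<in> hom C B D \<Longrightarrow> h \<in> hom C D E \<Longrightarrow>
   Comp C h (Comp C g f) = Comp C (Comp C h g) f"
  using is_cat unfolding is_category_def hom_iff by metis

lemma pb_transport:
  assumes pb: "is_pullback C u v Q' q1' q2'"
    and Q: "Q \<in> Obj C" and q1: "q1 \<in> hom C Q (Dom C u)" and q2: "q2 \<in> hom C Q (Dom C v)"
    and h: "h \<in> hom C Q' Q" and h': "h' \<in> hom C Q Q'" and hh: "Comp C h h' = Idm C Q"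
    and e1: "Comp C q1 h = q1'" and e2: "Comp C q2 h = q2'"
    and e1': "Comp C q1' h' = q1" and e2': "Comp C q2' h' = q2"
  shows "is_pullback C u v Q q1 q2"
proof -
  have u: "u \<in> Arr C" and v: "v \<in> Arr C" and cc: "Cod C u = Cod C v"
    and q1': "q1' \<in> hom C Q' (Dom C u)" and q2': "q2' \<in> hom C Q' (Dom C v)"
    and sq: "Comp C u q1' = Comp C v q2'"
    and U: "\<forall>Z\<in>Obj C. \<forall>f\<in>hom C Z (Dom C u). \<forall>g\<in>hom C Z (Dom C v).
        Comp C u f = Comp C v g \<longrightarrow> (\<exists>!h. h \<in> hom C Z Q' \<and> Comp C q1' h = f \<and> Comp C q2' h = g)"
    using pb by (auto simp: is_pullback_def)
  have uh: "u \<in> hom C (Dom C u) (Cod C u)" and vh: "v \<in> hom C (Dom C v) (Cod C u)"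
    using u v cc by (auto simp: hom_iff)
  have "Comp C u q1 = Comp C u (Comp C q1' h')" using e1' by simp
  also have "\<dots> = Comp C (Comp C u q1') h'" using assoc[OF h' q1' uh] .
  also have "\<dots> = Comp C (Comp C v q2') h'" using sq by simp
  also have "\<dots> = Comp C v (Comp C q2' h')" using assoc[OF h' q2' vh] by simp
  finally have sq': "Comp C u q1 = Comp C v q2" using e2' by simp
  have "\<exists>!k. k \<in> hom C Z Q \<and> Comp C q1 k = f \<and> Comp C q2 k = g"
    if Z: "Z \<in> Obj C" and f: "f \<in> hom C Z (Dom C u)" and g: "g \<in> hom C Z (Dom C v)"
      and fg: "Comp C u f = Comp C v g" for Z f g
  proof -
    obtain m where m: "m \<in> hom C Z Q'" "Comp C q1' m = f" "Comp C q2' m = g"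
      and mu: "\<And>m'. m' \<in> hom C Z Q' \<Longrightarrow> Comp C q1' m' = f \<Longrightarrow> Comp C q2' m' = g \<Longrightarrow> m' = m"
      using U Z f g fg by metis
    show ?thesis
    proof (rule ex1I[of _ "Comp C h m"])
      show "Comp C h m \<in> hom C Z Q \<and> Comp C q1 (Comp C h m) = f \<and> Comp C q2 (Comp C h m) = g"
        using comp_hom[OF m(1) h] assoc[OF m(1) h q1] assoc[OF m(1) h q2] e1 e2 m by simp
    next
      fix k assume k: "k \<in> hom C Z Q \<and> Comp C q1 k = f \<and> Comp C q2 k = g"
      have hk: "Comp C h' k \<in> hom C Z Q'" using k comp_hom h' by blast
      have "Comp C q1' (Comp C h' k) = f" using assoc[OF _ h' q1'] k e1' by metis
      moreover have "Comp C q2' (Comp C h' k) = g" using assoc[OF _ h' q2'] k e2' by metis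
      ultimately have "Comp C h' k = m" using mu hk by blast
      hence "Comp C h m = Comp C (Comp C h h') k" using assoc[OF _ h' h] k by metis
      also have "\<dots> = k" using hh id_left[of k Z Q] k by simp
      finally show "k = Comp C h m" by simp
    qed
  qed
  thus ?thesis using u v cc Q q1 q2 sq' unfolding is_pullback_def by blast
qed

lemma prod_transport:
  assumes pr: "is_product C A B X' p1' p2'"
    and X: "X \<in> Obj C" and p1: "p1 \<in> hom C X A" and p2: "p2 \<in> hom C X B"
    and h: "h \<in> hom C X' X" and h': "h' \<in> hom C X X'" and hh: "Comp C h h' = Idm C X"
    and e1: "Comp C p1 h = p1'" and e2: "Comp C p2 h = p2'"
    and e1': "Comp C p1' h' = p1" and e2': "Comp C p2' h' = p2"
  shows "is_product C A B X p1 p2"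
proof -
  have p1': "p1' \<in> hom C X' A" and p2': "p2' \<in> hom C X' B"
    and U: "\<forall>Z\<in>Obj C. \<forall>f\<in>hom C Z A. \<forall>g\<in>hom C Z B.
        \<exists>!h. h \<in> hom C Z X' \<and> Comp C p1' h = f \<and> Comp C p2' h = g"
    using pr by (auto simp: is_product_def)
  have "\<exists>!k. k \<in> hom C Z X \<and> Comp C p1 k = f \<and> Comp C p2 k = g"
    if Z: "Z \<in> Obj C" and f: "f \<in> hom C Z A" and g: "g \<in> hom C Z B" for Z f g
  proof -
    obtain m where m: "m \<in> hom C Z X'" "Comp C p1' m = f" "Comp C p2' m = g"
      and mu: "\<And>m'. m' \<in> hom C Z X' \<Longrightarrow> Comp C p1' m' = f \<Longrightarrow> Comp C p2' m' = g \<Longrightarrow> m' = m"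
      using U Z f g by metis
    show ?thesis
    proof (rule ex1I[of _ "Comp C h m"])
      show "Comp C h m \<in> hom C Z X \<and> Comp C p1 (Comp C h m) = f \<and> Comp C p2 (Comp C h m) = g"
        using comp_hom[OF m(1) h] assoc[OF m(1) h p1] assoc[OF m(1) h p2] e1 e2 m by simp
    next
      fix k assume k: "k \<in> hom C Z X \<and> Comp C p1 k = f \<and> Comp C p2 k = g"
      have hk: "Comp C h' k \<in> hom C Z X'" using k comp_hom h' by blast
      have "Comp C p1' (Comp C h' k) = f" using assoc[OF _ h' p1'] k e1' by metis
      moreover have "Comp C p2' (Comp C h' k) = g" using assoc[OF _ h' p2'] k e2' by metis
      ultimately have "Comp C h' k = m" using mu hk by blast
      hence "Comp C h m = Comp C (Comp C h h') k" using assoc[OF _ h' h] k by metis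
      also have "\<dots> = k" using hh id_left[of k Z X] k by simp
      finally show "k = Comp C h m" by simp
    qed
  qed
  thus ?thesis using X p1 p2 unfolding is_product_def by blast
qed

lemma term_transport:
  assumes t: "is_terminal C e'" and e: "e \<in> Obj C"
    and h: "h \<in> hom C e' e" and h': "h' \<in> hom C e e'" and hh: "Comp C h h' = Idm C e"
  shows "is_terminal C e"
proof -
  have "\<exists>!k. k \<in> hom C Z e" if Z: "Z \<in> Obj C" for Z
  proof -
    obtain m where m: "m \<in> hom C Z e'" and mu: "\<And>m'. m' \<in> hom C Z e' \<Longrightarrow> m' = m"
      using t Z unfolding is_terminal_def by metis
    show ?thesis
    proof (rule ex1I[of _ "Comp C h m"])
      show "Comp C h m \<in> hom C Z e" using comp_hom m h by blast
    next
      fix k assume k: "k \<in> hom C Z e"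
      have "Comp C h' k = m" using mu comp_hom[OF k h'] by blast
      hence "Comp C h m = Comp C (Comp C h h') k" using assoc[OF k h' h] by metis
      also have "\<dots> = k" using hh id_left[of k] k by simp
      finally show "k = Comp C h m" by simp
    qed
  qed
  thus ?thesis using e unfolding is_terminal_def by blast
qed

end


lemma fun_obj: "is_functor C D Fo Fm \<Longrightarrow> A \<in> Obj C \<Longrightarrow> Fo A \<in> Obj D"
  by (simp add: is_functor_def)
lemma fun_hom: "is_functor C D Fo Fm \<Longrightarrow> f \<in> hom C A B \<Longrightarrow> Fm f \<in> hom D (Fo A) (Fo B)"
  unfolding is_functor_def hom_iff by metis
lemma fun_comp: "is_functor C D Fo Fm \<Longrightarrow> f \<in> hom C A B \<Longrightarrow> g \<in> hom C B E \<Longrightarrow>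
    Fm (Comp C g f) = Comp D (Fm g) (Fm f)"
  unfolding is_functor_def hom_iff by metis
lemma fun_id: "is_functor C D Fo Fm \<Longrightarrow> A \<in> Obj C \<Longrightarrow> Fm (Idm C A) = Idm D (Fo A)"
  unfolding is_functor_def by metis
lemma nat_hom: "nat_trans C F Fm G' Gm eta \<Longrightarrow> A \<in> Obj C \<Longrightarrow> eta A \<in> hom C (F A) (G' A)"
  unfolding nat_trans_def by metis
lemma nat_nat: "nat_trans C F Fm G' Gm eta \<Longrightarrow> f \<in> hom C A B \<Longrightarrow>
    Comp C (Gm f) (eta A) = Comp C (eta B) (Fm f)"
  unfolding nat_trans_def hom_iff by metis

locale GS =
  fixes I :: "('i,'u) cat" and C :: "'i \<Rightarrow> ('o,'m) cat"
    and Fo :: "'u \<Rightarrow> 'o \<Rightarrow> 'o" and Fm :: "'u \<Rightarrow> 'm \<Rightarrow> 'm"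
    and S :: "'i \<Rightarrow> ('o,'m) pstruct"
  assumes I_cat: "is_category I"
    and C_functor: "\<forall>u\<in>Arr I. is_functor (C (Dom I u)) (C (Cod I u)) (Fo u) (Fm u)"
    and C_Pcat: "\<forall>i\<in>Obj I. is_Pcat (C i) (S i)"
    and u_paths: "\<forall>u\<in>Arr I. preserves_paths (C (Dom I u)) (S (Dom I u)) (S (Cod I u)) (Fo u) (Fm u)"
begin

abbreviation "G \<equiv> Gamma I C Fo Fm"
abbreviation "GP \<equiv> Gamma_P I C Fo Fm S"
abbreviation "gP \<equiv> gP_obj I S"

lemma Pc: "i \<in> Obj I \<Longrightarrow> is_Pcat (C i) (S i)" using C_Pcat by blast
lemma catC: "i \<in> Obj I \<Longrightarrow> category (C i)"
  using Pc unfolding is_Pcat_def Let_def category_def by blast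

lemma dI: "u \<in> Arr I \<Longrightarrow> Dom I u \<in> Obj I" using I_cat by (simp add: is_category_def)
lemma cI: "u \<in> Arr I \<Longrightarrow> Cod I u \<in> Obj I" using I_cat by (simp add: is_category_def)

lemma Fo_obj: "u \<in> Arr I \<Longrightarrow> A \<in> Obj (C (Dom I u)) \<Longrightarrow> Fo u A \<in> Obj (C (Cod I u))"
  using C_functor by (auto simp: is_functor_def)
lemma Fm_hom: "u \<in> Arr I \<Longrightarrow> f \<in> hom (C (Dom I u)) A B \<Longrightarrow> Fm u f \<in> hom (C (Cod I u)) (Fo u A) (Fo u B)"
  using C_functor unfolding is_functor_def hom_iff by metis
lemma Fm_comp: "u \<in> Arr I \<Longrightarrow> f \<in> hom (C (Dom I u)) A B \<Longrightarrow> g \<in> hom (C (Dom I u)) B D \<Longrightarrow>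
   Fm u (Comp (C (Dom I u)) g f) = Comp (C (Cod I u)) (Fm u g) (Fm u f)"
  using C_functor unfolding is_functor_def hom_iff by metis
lemma Fm_id: "u \<in> Arr I \<Longrightarrow> A \<in> Obj (C (Dom I u)) \<Longrightarrow> Fm u (Idm (C (Dom I u)) A) = Idm (C (Cod I u)) (Fo u A)"
  using C_functor unfolding is_functor_def by metis

lemma pp: "u \<in> Arr I \<Longrightarrow> preserves_paths (C (Dom I u)) (S (Dom I u)) (S (Cod I u)) (Fo u) (Fm u)"
  using u_paths by blast

lemma G_Obj: "Obj G = Gamma_obj I C Fo" by (simp add: Gamma_def)
lemma G_Arr: "Arr G = Gamma_arr I C Fo Fm" by (simp add: Gamma_def)
lemma G_Dom[simp]: "Dom G (X,Y,f) = X" by (simp add: Gamma_def)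
lemma G_Cod[simp]: "Cod G (X,Y,f) = Y" by (simp add: Gamma_def)
lemma G_Idm: "Idm G X = (X, X, lw (Obj I) (\<lambda>i. Idm (C i) (fst X i)))" by (simp add: Gamma_def)
lemma G_Comp[simp]: "Comp G (Y',Z,g) (X,Y,f) = (X, Z, lw (Obj I) (\<lambda>i. Comp (C i) (g i) (f i)))"
  by (simp add: Gamma_def)

lemma GobjI:
  assumes "\<And>i. i \<in> Obj I \<Longrightarrow> A i \<in> Obj (C i)" "\<And>i. i \<notin> Obj I \<Longrightarrow> A i = undefined"
    "\<And>u. u \<in> Arr I \<Longrightarrow> phi u \<in> hom (C (Cod I u)) (Fo u (A (Dom I u))) (A (Cod I u))"
    "\<And>u. u \<notin> Arr I \<Longrightarrow> phi u = undefined"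
  shows "(A, phi) \<in> Obj G"
  using assms by (simp add: G_Obj Gamma_obj_def)

lemma Gobj_lv: "X \<in> Obj G \<Longrightarrow> i \<in> Obj I \<Longrightarrow> fst X i \<in> Obj (C i)"
  by (auto simp: G_Obj Gamma_obj_def)
lemma Gobj_ext: "X \<in> Obj G \<Longrightarrow> i \<notin> Obj I \<Longrightarrow> fst X i = undefined"
  by (auto simp: G_Obj Gamma_obj_def)
lemma Gobj_phi: "X \<in> Obj G \<Longrightarrow> u \<in> Arr I \<Longrightarrow>
   snd X u \<in> hom (C (Cod I u)) (Fo u (fst X (Dom I u))) (fst X (Cod I u))"
  by (auto simp: G_Obj Gamma_obj_def)
lemma Gobj_phi_ext: "X \<in> Obj G \<Longrightarrow> u \<notin> Arr I \<Longrightarrow> snd X u = undefined"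
  by (auto simp: G_Obj Gamma_obj_def)

lemma GarrI:
  assumes "X \<in> Obj G" "Y \<in> Obj G"
    "\<And>i. i \<in> Obj I \<Longrightarrow> f i \<in> hom (C i) (fst X i) (fst Y i)"
    "\<And>i. i \<notin> Obj I \<Longrightarrow> f i = undefined"
    "\<And>u. u \<in> Arr I \<Longrightarrow> Comp (C (Cod I u)) (f (Cod I u)) (snd X u) =
                  Comp (C (Cod I u)) (snd Y u) (Fm u (f (Dom I u)))"
  shows "(X, Y, f) \<in> Arr G"
  using assms by (simp add: G_Arr Gamma_arr_def G_Obj)

lemma GarrD:
  assumes "(X, Y, f) \<in> Arr G"
  shows "X \<in> Obj G" "Y \<in> Obj G"
    "\<And>i. i \<in> Obj I \<Longrightarrow> f i \<in> hom (C i) (fst X i) (fst Y i)"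
    "\<And>i. i \<notin> Obj I \<Longrightarrow> f i = undefined"
    "\<And>u. u \<in> Arr I \<Longrightarrow> Comp (C (Cod I u)) (f (Cod I u)) (snd X u) =
                  Comp (C (Cod I u)) (snd Y u) (Fm u (f (Dom I u)))"
  using assms by (auto simp: G_Arr Gamma_arr_def G_Obj)

lemma Ghom_iff: "(X', Y', f) \<in> hom G X Y \<longleftrightarrow> (X', Y', f) \<in> Arr G \<and> X' = X \<and> Y' = Y"
  by (simp add: hom_iff)

lemma G_lw_f: "(X, Y, f) \<in> Arr G \<Longrightarrow> lw (Obj I) f = f"
  using GarrD(4) lw_ext by metis

lemma G_id_arr: assumes X: "X \<in> Obj G" shows "Idm G X \<in> hom G X X"
proof -
  have "(X, X, lw (Obj I) (\<lambda>i. Idm (C i) (fst X i))) \<in> Arr G"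
  proof (rule GarrI[OF X X])
    fix i assume "i \<in> Obj I" thus "lw (Obj I) (\<lambda>i. Idm (C i) (fst X i)) i \<in> hom (C i) (fst X i) (fst X i)"
      using category.id_hom[OF catC] Gobj_lv[OF X] by simp
  next
    fix u assume u: "u \<in> Arr I"
    have ph: "snd X u \<in> hom (C (Cod I u)) (Fo u (fst X (Dom I u))) (fst X (Cod I u))" using Gobj_phi X u by blast
    show "Comp (C (Cod I u)) (lw (Obj I) (\<lambda>i. Idm (C i) (fst X i)) (Cod I u)) (snd X u) =
        Comp (C (Cod I u)) (snd X u) (Fm u (lw (Obj I) (\<lambda>i. Idm (C i) (fst X i)) (Dom I u)))"
      using u dI cI Fm_id[OF u Gobj_lv[OF X dI[OF u]]] category.id_left[OF catC[OF cI[OF u]] ph]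
        category.id_right[OF catC[OF cI[OF u]] ph] by simp
  qed simp
  thus ?thesis by (simp add: G_Idm hom_iff)
qed

lemma G_comp_arr:
  assumes f: "(X, Y, f) \<in> Arr G" and g: "(Y, Z, g) \<in> Arr G"
  shows "(X, Z, lw (Obj I) (\<lambda>i. Comp (C i) (g i) (f i))) \<in> Arr G"
proof (rule GarrI)
  show "X \<in> Obj G" "Z \<in> Obj G" using GarrD f g by auto
  fix i assume i: "i \<in> Obj I"
  show "lw (Obj I) (\<lambda>i. Comp (C i) (g i) (f i)) i \<in> hom (C i) (fst X i) (fst Z i)"
    using i category.comp_hom[OF catC[OF i] GarrD(3)[OF f i] GarrD(3)[OF g i]] by simp
next
  fix u assume u: "u \<in> Arr I"
  let ?i = "Dom I u" and ?j = "Cod I u"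
  have i: "?i \<in> Obj I" and j: "?j \<in> Obj I" using dI cI u by auto
  interpret Cj: category "C ?j" using catC j .
  have fi: "f ?i \<in> hom (C ?i) (fst X ?i) (fst Y ?i)" and gi: "g ?i \<in> hom (C ?i) (fst Y ?i) (fst Z ?i)"
    using GarrD(3) f g i by auto
  have fj: "f ?j \<in> hom (C ?j) (fst X ?j) (fst Y ?j)" and gj: "g ?j \<in> hom (C ?j) (fst Y ?j) (fst Z ?j)"
    using GarrD(3) f g j by auto
  have pX: "snd X u \<in> hom (C ?j) (Fo u (fst X ?i)) (fst X ?j)"
   and pY: "snd Y u \<in> hom (C ?j) (Fo u (fst Y ?i)) (fst Y ?j)"
   and pZ: "snd Z u \<in> hom (C ?j) (Fo u (fst Z ?i)) (fst Z ?j)"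
    using Gobj_phi GarrD f g u by blast+
  have Ff: "Fm u (f ?i) \<in> hom (C ?j) (Fo u (fst X ?i)) (Fo u (fst Y ?i))" using Fm_hom u fi by blast
  have Fg: "Fm u (g ?i) \<in> hom (C ?j) (Fo u (fst Y ?i)) (Fo u (fst Z ?i))" using Fm_hom u gi by blast
  have "Comp (C ?j) (Comp (C ?j) (g ?j) (f ?j)) (snd X u) = Comp (C ?j) (g ?j) (Comp (C ?j) (f ?j) (snd X u))"
    using Cj.assoc[OF pX fj gj] by simp
  also have "\<dots> = Comp (C ?j) (g ?j) (Comp (C ?j) (snd Y u) (Fm u (f ?i)))" using GarrD(5)[OF f u] by simp
  also have "\<dots> = Comp (C ?j) (Comp (C ?j) (g ?j) (snd Y u)) (Fm u (f ?i))" using Cj.assoc[OF Ff pY gj] .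
  also have "\<dots> = Comp (C ?j) (Comp (C ?j) (snd Z u) (Fm u (g ?i))) (Fm u (f ?i))" using GarrD(5)[OF g u] by simp
  also have "\<dots> = Comp (C ?j) (snd Z u) (Comp (C ?j) (Fm u (g ?i)) (Fm u (f ?i)))" using Cj.assoc[OF Ff Fg pZ] by simp
  also have "\<dots> = Comp (C ?j) (snd Z u) (Fm u (Comp (C ?i) (g ?i) (f ?i)))" using Fm_comp[OF u fi gi] by simp
  finally show "Comp (C ?j) (lw (Obj I) (\<lambda>i. Comp (C i) (g i) (f i)) ?j) (snd X u) =
      Comp (C ?j) (snd Z u) (Fm u (lw (Obj I) (\<lambda>i. Comp (C i) (g i) (f i)) ?i))" using i j by simp
qed simp

lemma G_cat: "is_category G"
proof -
  have A: "\<forall>f\<in>Arr G. Dom G f \<in> Obj G \<and> Cod G f \<in> Obj G"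
    using GarrD by (auto simp: G_Arr)
  have B: "\<forall>A\<in>Obj G. Idm G A \<in> hom G A A" using G_id_arr by blast
  have Cc: "Comp G g f \<in> hom G (Dom G f) (Cod G g)"
    if "f \<in> Arr G" "g \<in> Arr G" "Cod G f = Dom G g" for f g
    using that G_comp_arr by (cases f; cases g) (auto simp: hom_iff)
  have D: "Comp G f (Idm G (Dom G f)) = f \<and> Comp G (Idm G (Cod G f)) f = f" if f: "f \<in> Arr G" for f
  proof -
    obtain X Y h where fe: "f = (X,Y,h)" by (cases f)
    have "lw (Obj I) (\<lambda>i. Comp (C i) (h i) (Idm (C i) (fst X i))) = h"
         "lw (Obj I) (\<lambda>i. Comp (C i) (Idm (C i) (fst Y i)) (h i)) = h"
      using f fe GarrD(3)[of X Y h] category.id_left[OF catC] category.id_right[OF catC]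
      by (auto intro!: lw_eqI simp: GarrD(4)[of X Y h]) (metis category.id_right catC, metis category.id_left catC)
    thus ?thesis using fe by (simp add: G_Idm)
  qed
  have E: "Comp G h (Comp G g f) = Comp G (Comp G h g) f"
    if "f \<in> Arr G" "g \<in> Arr G" "h \<in> Arr G" "Cod G f = Dom G g" "Cod G g = Dom G h" for f g h
  proof -
    obtain X Y a where fe: "f = (X,Y,a)" by (cases f)
    obtain Y2 Z b where ge: "g = (Y2,Z,b)" by (cases g)
    obtain Z2 W c where he: "h = (Z2,W,c)" by (cases h)
    have "lw (Obj I) (\<lambda>x. Comp (C x) (c x) (Comp (C x) (b x) (a x))) =
        lw (Obj I) (\<lambda>x. Comp (C x) (Comp (C x) (c x) (b x)) (a x))"
      using that fe ge he GarrD(3)[of X Y a] GarrD(3)[of Y Z b] GarrD(3)[of Z W c]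
      by (intro lw_cong2) (metis G_Cod G_Dom category.assoc catC)
    thus ?thesis using that fe ge he by simp
  qed
  show ?thesis unfolding is_category_def using A B Cc D E by blast
qed

sublocale G: category G using G_cat by unfold_locales


lemma Pfun: "i \<in> Obj I \<Longrightarrow> is_functor (C i) (C i) (PO (S i)) (PM (S i))"
  using Pc unfolding is_Pcat_def Let_def by blast

lemma pp_PO: "u \<in> Arr I \<Longrightarrow> A \<in> Obj (C (Dom I u)) \<Longrightarrow> Fo u (PO (S (Dom I u)) A) = PO (S (Cod I u)) (Fo u A)"
  using pp unfolding preserves_paths_def by blast
lemma pp_PM: "u \<in> Arr I \<Longrightarrow> f \<in> Arr (C (Dom I u)) \<Longrightarrow> Fm u (PM (S (Dom I u)) f) = PM (S (Cod I u)) (Fm u f)"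
  using pp unfolding preserves_paths_def by blast
lemma pp_maps:
  assumes "u \<in> Arr I" "A \<in> Obj (C (Dom I u))"
  shows "Fm u (iota (S (Dom I u)) A) = iota (S (Cod I u)) (Fo u A)"
    "Fm u (dl0 (S (Dom I u)) A) = dl0 (S (Cod I u)) (Fo u A)"
    "Fm u (dl1 (S (Dom I u)) A) = dl1 (S (Cod I u)) (Fo u A)"
    "Fm u (tau (S (Dom I u)) A) = tau (S (Cod I u)) (Fo u A)"
    "Fm u (cc (S (Dom I u)) A) = cc (S (Cod I u)) (Fo u A)"
    "Fm u (mu (S (Dom I u)) A) = mu (S (Cod I u)) (Fo u A)"
    "Fm u (nabla (S (Dom I u)) A) = nabla (S (Cod I u)) (Fo u A)"
  using pp[OF assms(1)] assms(2) unfolding preserves_paths_def by blast+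

lemma GP_simps:
  "PO GP = gP"
  "PM GP (X,Y,f) = (gP X, gP Y, lw (Obj I) (\<lambda>i. PM (S i) (f i)))"
  "iota GP X = (X, gP X, lw (Obj I) (\<lambda>i. iota (S i) (fst X i)))"
  "dl0 GP X = (gP X, X, lw (Obj I) (\<lambda>i. dl0 (S i) (fst X i)))"
  "dl1 GP X = (gP X, X, lw (Obj I) (\<lambda>i. dl1 (S i) (fst X i)))"
  "tau GP X = (gP X, gP X, lw (Obj I) (\<lambda>i. tau (S i) (fst X i)))"
  "cc GP X = (gP X, gP (gP X), lw (Obj I) (\<lambda>i. cc (S i) (fst X i)))"
  "mu GP X = (gP (gP X), gP (gP X), lw (Obj I) (\<lambda>i. mu (S i) (fst X i)))"
  "nabla GP X = (gP (gP X), gP X, lw (Obj I) (\<lambda>i. nabla (S i) (fst X i)))"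
  "Fib GP = {F \<in> Arr G. \<forall>i\<in>Obj I. snd (snd F) i \<in> Fib (S i)}"
  "WE GP = {F \<in> Arr G. \<forall>i\<in>Obj I. snd (snd F) i \<in> WE (S i)}"
  by (simp_all add: Gamma_P_def Let_def G_Arr)

lemma gP_fst[simp]: "i \<in> Obj I \<Longrightarrow> fst (gP X) i = PO (S i) (fst X i)"
  by (simp add: gP_obj_def)
lemma gP_snd[simp]: "u \<in> Arr I \<Longrightarrow> snd (gP X) u = PM (S (Cod I u)) (snd X u)"
  by (simp add: gP_obj_def)

definition lwfun where "lwfun FX FmX FO FM \<longleftrightarrow>
 (\<forall>X\<in>Obj G. FX X \<in> Obj G \<and> (\<forall>i\<in>Obj I. fst (FX X) i = FO i (fst X i)) \<and>
    (\<forall>u\<in>Arr I. snd (FX X) u = FM (Cod I u) (snd X u))) \<and>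
 (\<forall>F\<in>Arr G. FmX F = (FX (fst F), FX (fst (snd F)), lw (Obj I) (\<lambda>i. FM i (snd (snd F) i)))) \<and>
 (\<forall>i\<in>Obj I. is_functor (C i) (C i) (FO i) (FM i)) \<and>
 (\<forall>u\<in>Arr I. \<forall>A\<in>Obj (C (Dom I u)). Fo u (FO (Dom I u) A) = FO (Cod I u) (Fo u A)) \<and>
 (\<forall>u\<in>Arr I. \<forall>f\<in>Arr (C (Dom I u)). Fm u (FM (Dom I u) f) = FM (Cod I u) (Fm u f))"

lemma lwfunI:
  assumes "\<And>X. X \<in> Obj G \<Longrightarrow> FX X \<in> Obj G"
    "\<And>X i. X \<in> Obj G \<Longrightarrow> i \<in> Obj I \<Longrightarrow> fst (FX X) i = FO i (fst X i)"
    "\<And>X u. X \<in> Obj G \<Longrightarrow> u \<in> Arr I \<Longrightarrow> snd (FX X) u = FM (Cod I u) (snd X u)"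
    "\<And>X Y f. (X,Y,f) \<in> Arr G \<Longrightarrow> FmX (X,Y,f) = (FX X, FX Y, lw (Obj I) (\<lambda>i. FM i (f i)))"
    "\<And>i. i \<in> Obj I \<Longrightarrow> is_functor (C i) (C i) (FO i) (FM i)"
    "\<And>u A. u \<in> Arr I \<Longrightarrow> A \<in> Obj (C (Dom I u)) \<Longrightarrow> Fo u (FO (Dom I u) A) = FO (Cod I u) (Fo u A)"
    "\<And>u f. u \<in> Arr I \<Longrightarrow> f \<in> Arr (C (Dom I u)) \<Longrightarrow> Fm u (FM (Dom I u) f) = FM (Cod I u) (Fm u f)"
  shows "lwfun FX FmX FO FM"
proof -
  have "\<forall>F\<in>Arr G. FmX F = (FX (fst F), FX (fst (snd F)), lw (Obj I) (\<lambda>i. FM i (snd (snd F) i)))"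
  proof
    fix F assume "F \<in> Arr G"
    thus "FmX F = (FX (fst F), FX (fst (snd F)), lw (Obj I) (\<lambda>i. FM i (snd (snd F) i)))"
      using assms(4) by (cases F) simp
  qed
  moreover have "\<forall>X\<in>Obj G. FX X \<in> Obj G \<and> (\<forall>i\<in>Obj I. fst (FX X) i = FO i (fst X i)) \<and>
    (\<forall>u\<in>Arr I. snd (FX X) u = FM (Cod I u) (snd X u))" using assms(1-3) by simp
  ultimately show ?thesis unfolding lwfun_def using assms(5-7) by simp
qed

context
  fixes FX FmX FO FM assumes L: "lwfun FX FmX FO FM"
begin
lemma lwF_obj: "X \<in> Obj G \<Longrightarrow> FX X \<in> Obj G" using L unfolding lwfun_def by blast
lemma lwF_fst: "X \<in> Obj G \<Longrightarrow> i \<in> Obj I \<Longrightarrow> fst (FX X) i = FO i (fst X i)" using L unfolding lwfun_def by blast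
lemma lwF_snd: "X \<in> Obj G \<Longrightarrow> u \<in> Arr I \<Longrightarrow> snd (FX X) u = FM (Cod I u) (snd X u)" using L unfolding lwfun_def by blast
lemma lwF_Fm: "(X,Y,f) \<in> Arr G \<Longrightarrow> FmX (X,Y,f) = (FX X, FX Y, lw (Obj I) (\<lambda>i. FM i (f i)))"
proof -
  assume f: "(X,Y,f) \<in> Arr G"
  have "\<forall>F\<in>Arr G. FmX F = (FX (fst F), FX (fst (snd F)), lw (Obj I) (\<lambda>i. FM i (snd (snd F) i)))"
    using L unfolding lwfun_def by blast
  from bspec[OF this f] show ?thesis by simp
qed
lemma lwF_fun: "i \<in> Obj I \<Longrightarrow> is_functor (C i) (C i) (FO i) (FM i)" using L unfolding lwfun_def by blast
lemma lwF_Fo: "u \<in> Arr I \<Longrightarrow> A \<in> Obj (C (Dom I u)) \<Longrightarrow> Fo u (FO (Dom I u) A) = FO (Cod I u) (Fo u A)"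
  using L unfolding lwfun_def by blast
lemma lwF_FmM: "u \<in> Arr I \<Longrightarrow> f \<in> Arr (C (Dom I u)) \<Longrightarrow> Fm u (FM (Dom I u) f) = FM (Cod I u) (Fm u f)"
  using L unfolding lwfun_def by blast

lemma lwfun_arr:
  assumes f: "(X,Y,f) \<in> Arr G"
  shows "(FX X, FX Y, lw (Obj I) (\<lambda>i. FM i (f i))) \<in> Arr G"
proof -
  have X: "X \<in> Obj G" and Y: "Y \<in> Obj G" using GarrD f by auto
  show ?thesis
  proof (rule GarrI)
    show "FX X \<in> Obj G" "FX Y \<in> Obj G" using lwF_obj X Y by auto
    fix i assume i: "i \<in> Obj I"
    show "lw (Obj I) (\<lambda>i. FM i (f i)) i \<in> hom (C i) (fst (FX X) i) (fst (FX Y) i)"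
      using X Y i fun_hom[OF lwF_fun[OF i] GarrD(3)[OF f i]] lwF_fst by auto
  next
    fix u assume u: "u \<in> Arr I"
    let ?i = "Dom I u" and ?j = "Cod I u"
    have i: "?i \<in> Obj I" and j: "?j \<in> Obj I" using dI cI u by auto
    have Fj: "is_functor (C ?j) (C ?j) (FO ?j) (FM ?j)" using lwF_fun j by blast
    have fi: "f ?i \<in> hom (C ?i) (fst X ?i) (fst Y ?i)" and fj: "f ?j \<in> hom (C ?j) (fst X ?j) (fst Y ?j)"
      using GarrD(3) f i j by auto
    have pX: "snd X u \<in> hom (C ?j) (Fo u (fst X ?i)) (fst X ?j)"
     and pY: "snd Y u \<in> hom (C ?j) (Fo u (fst Y ?i)) (fst Y ?j)" using Gobj_phi X Y u by auto
    have Ff: "Fm u (f ?i) \<in> hom (C ?j) (Fo u (fst X ?i)) (Fo u (fst Y ?i))" using Fm_hom u fi by blast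
    have "Comp (C ?j) (FM ?j (f ?j)) (FM ?j (snd X u)) = FM ?j (Comp (C ?j) (f ?j) (snd X u))"
      using fun_comp[OF Fj pX fj] by simp
    also have "\<dots> = FM ?j (Comp (C ?j) (snd Y u) (Fm u (f ?i)))" using GarrD(5)[OF f u] by simp
    also have "\<dots> = Comp (C ?j) (FM ?j (snd Y u)) (FM ?j (Fm u (f ?i)))" using fun_comp[OF Fj Ff pY] .
    also have "FM ?j (Fm u (f ?i)) = Fm u (FM ?i (f ?i))" using lwF_FmM u fi by (auto simp: hom_iff)
    finally show "Comp (C ?j) (lw (Obj I) (\<lambda>i. FM i (f i)) ?j) (snd (FX X) u) =
      Comp (C ?j) (snd (FX Y) u) (Fm u (lw (Obj I) (\<lambda>i. FM i (f i)) ?i))"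
      using X Y u i j lwF_snd by simp
  qed simp
qed

lemma lwfun_functor: "is_functor G G FX FmX"
proof -
  have A: "\<forall>A\<in>Obj G. FX A \<in> Obj G" using lwF_obj by blast
  have B: "FmX f \<in> hom G (FX (Dom G f)) (FX (Cod G f))" if "f \<in> Arr G" for f
  proof -
    obtain X Y a where fe: "f = (X,Y,a)" by (cases f)
    have fa: "(X,Y,a) \<in> Arr G" using that fe by simp
    show ?thesis using lwfun_arr[OF fa] lwF_Fm[OF fa] fe by (simp add: hom_iff)
  qed
  have Cc: "FmX (Idm G X) = Idm G (FX X)" if X: "X \<in> Obj G" for X
  proof -
    have "Idm G X \<in> Arr G" using G.id_hom[OF X] by (simp add: hom_iff)
    hence "FmX (Idm G X) = (FX X, FX X, lw (Obj I) (\<lambda>i. FM i (lw (Obj I) (\<lambda>i. Idm (C i) (fst X i)) i)))"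
      using lwF_Fm by (simp add: G_Idm)
    also have "\<dots> = Idm G (FX X)"
    proof -
      have "lw (Obj I) (\<lambda>i. FM i (lw (Obj I) (\<lambda>i. Idm (C i) (fst X i)) i)) = lw (Obj I) (\<lambda>i. Idm (C i) (fst (FX X) i))"
      proof (rule lw_cong2)
        fix i assume i: "i \<in> Obj I"
        show "FM i (lw (Obj I) (\<lambda>i. Idm (C i) (fst X i)) i) = Idm (C i) (fst (FX X) i)"
          using fun_id[OF lwF_fun[OF i] Gobj_lv[OF X i]] lwF_fst[OF X i] i by simp
      qed
      thus ?thesis by (simp add: G_Idm)
    qed
    finally show ?thesis .
  qed
  have D: "FmX (Comp G g f) = Comp G (FmX g) (FmX f)"
    if "f \<in> Arr G" "g \<in> Arr G" "Cod G f = Dom G g" for f g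
  proof -
    obtain X Y a where fe: "f = (X,Y,a)" by (cases f)
    obtain Y2 Z b where ge: "g = (Y2,Z,b)" by (cases g)
    have fa: "(X,Y,a) \<in> Arr G" and gb: "(Y,Z,b) \<in> Arr G" using that fe ge by auto
    have ca: "(X, Z, lw (Obj I) (\<lambda>i. Comp (C i) (b i) (a i))) \<in> Arr G" using G_comp_arr fa gb by blast
    have "lw (Obj I) (\<lambda>i. FM i (lw (Obj I) (\<lambda>i. Comp (C i) (b i) (a i)) i)) =
          lw (Obj I) (\<lambda>i. Comp (C i) (FM i (b i)) (FM i (a i)))"
      using GarrD(3)[OF fa] GarrD(3)[OF gb] fun_comp[OF lwF_fun] by (intro lw_cong2) (simp, blast)
    moreover have "Y2 = Y" using that fe ge by simp
    ultimately show ?thesis using fe ge lwF_Fm[OF ca] lwF_Fm[OF fa] lwF_Fm[OF gb] by simp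
  qed
  show ?thesis unfolding is_functor_def using A B Cc D by blast
qed
end

lemma lwfun_nat:
  assumes LF: "lwfun FX FmX FO FM" and LG: "lwfun GX GmX GO GM"
    and N: "\<And>i. i \<in> Obj I \<Longrightarrow> nat_trans (C i) (FO i) (FM i) (GO i) (GM i) (\<sigma> i)"
    and P: "\<And>u A. u \<in> Arr I \<Longrightarrow> A \<in> Obj (C (Dom I u)) \<Longrightarrow> Fm u (\<sigma> (Dom I u) A) = \<sigma> (Cod I u) (Fo u A)"
    and E: "\<And>X. X \<in> Obj G \<Longrightarrow> eta X = (FX X, GX X, lw (Obj I) (\<lambda>i. \<sigma> i (fst X i)))"
  shows "nat_trans G FX FmX GX GmX eta"
proof -
  have A: "eta X \<in> hom G (FX X) (GX X)" if X: "X \<in> Obj G" for X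
  proof -
    have "(FX X, GX X, lw (Obj I) (\<lambda>i. \<sigma> i (fst X i))) \<in> Arr G"
    proof (rule GarrI)
      show "FX X \<in> Obj G" "GX X \<in> Obj G" using lwF_obj[OF LF] lwF_obj[OF LG] X by auto
      fix i assume i: "i \<in> Obj I"
      show "lw (Obj I) (\<lambda>i. \<sigma> i (fst X i)) i \<in> hom (C i) (fst (FX X) i) (fst (GX X) i)"
        using i lwF_fst[OF LF X i] lwF_fst[OF LG X i] nat_hom[OF N[OF i] Gobj_lv[OF X i]] by auto
    next
      fix u assume u: "u \<in> Arr I"
      let ?i = "Dom I u" and ?j = "Cod I u"
      have i: "?i \<in> Obj I" and j: "?j \<in> Obj I" using dI cI u by auto
      have pX: "snd X u \<in> hom (C ?j) (Fo u (fst X ?i)) (fst X ?j)" using Gobj_phi X u by auto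
      have "Comp (C ?j) (\<sigma> ?j (fst X ?j)) (FM ?j (snd X u)) = Comp (C ?j) (GM ?j (snd X u)) (\<sigma> ?j (Fo u (fst X ?i)))"
        using nat_nat[OF N[OF j] pX] by simp
      thus "Comp (C ?j) (lw (Obj I) (\<lambda>i. \<sigma> i (fst X i)) ?j) (snd (FX X) u) =
          Comp (C ?j) (snd (GX X) u) (Fm u (lw (Obj I) (\<lambda>i. \<sigma> i (fst X i)) ?i))"
        using X u i j P[OF u Gobj_lv[OF X i]] lwF_snd[OF LF X u] lwF_snd[OF LG X u] by simp
    qed simp
    thus ?thesis using E[OF X] by (simp add: hom_iff)
  qed
  have B: "Comp G (GmX f) (eta (Dom G f)) = Comp G (eta (Cod G f)) (FmX f)" if f: "f \<in> Arr G" for f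
  proof -
    obtain X Y a where fe: "f = (X,Y,a)" by (cases f)
    have fa: "(X,Y,a) \<in> Arr G" using f fe by simp
    have X: "X \<in> Obj G" and Y: "Y \<in> Obj G" using GarrD fa by auto
    have "lw (Obj I) (\<lambda>i. Comp (C i) (GM i (a i)) (\<sigma> i (fst X i))) =
          lw (Obj I) (\<lambda>i. Comp (C i) (\<sigma> i (fst Y i)) (FM i (a i)))"
      using GarrD(3)[OF fa] nat_nat[OF N] by (intro lw_cong2) blast
    thus ?thesis using fe E[OF X] E[OF Y] lwF_Fm[OF LF fa] lwF_Fm[OF LG fa] by simp
  qed
  show ?thesis unfolding nat_trans_def using A B by blast
qed

lemma lwfun_id: "lwfun id id (\<lambda>i. id) (\<lambda>i. id)"
proof (rule lwfunI)
  fix i assume "i \<in> Obj I"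
  thus "is_functor (C i) (C i) id id"
    using catC unfolding is_functor_def category_def is_category_def hom_iff by simp
next
  fix X Y f assume "(X,Y,f) \<in> Arr G" thus "id (X, Y, f) = (id X, id Y, lw (Obj I) (\<lambda>i. id (f i)))"
    using G_lw_f by simp
qed auto

lemma gP_obj_in: assumes X: "X \<in> Obj G" shows "gP X \<in> Obj G"
proof -
  have "(fst (gP X), snd (gP X)) \<in> Obj G"
  proof (rule GobjI)
    fix i assume "i \<in> Obj I" thus "fst (gP X) i \<in> Obj (C i)" using fun_obj[OF Pfun] Gobj_lv[OF X] by simp
  next
    fix u assume u: "u \<in> Arr I"
    have "PM (S (Cod I u)) (snd X u) \<in> hom (C (Cod I u)) (PO (S (Cod I u)) (Fo u (fst X (Dom I u)))) (PO (S (Cod I u)) (fst X (Cod I u)))"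
      using fun_hom[OF Pfun[OF cI[OF u]] Gobj_phi[OF X u]] .
    thus "snd (gP X) u \<in> hom (C (Cod I u)) (Fo u (fst (gP X) (Dom I u))) (fst (gP X) (Cod I u))"
      using u dI cI pp_PO[OF u Gobj_lv[OF X dI[OF u]]] by simp
  qed (auto simp: gP_obj_def)
  thus ?thesis by simp
qed

lemma lwfun_P: "lwfun gP (PM GP) (\<lambda>i. PO (S i)) (\<lambda>i. PM (S i))"
  by (rule lwfunI) (auto simp: GP_simps gP_obj_in Pfun pp_PO pp_PM)

lemma lwfun_comp:
  assumes LF: "lwfun FX FmX FO FM" and LG: "lwfun GX GmX GO GM"
  shows "lwfun (\<lambda>X. GX (FX X)) (\<lambda>f. GmX (FmX f)) (\<lambda>i A. GO i (FO i A)) (\<lambda>i f. GM i (FM i f))"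
proof (rule lwfunI)
  fix X assume X: "X \<in> Obj G"
  show "GX (FX X) \<in> Obj G" using X lwF_obj[OF LF] lwF_obj[OF LG] by blast
  fix i assume i: "i \<in> Obj I"
  show "fst (GX (FX X)) i = GO i (FO i (fst X i))" using X i lwF_fst[OF LF] lwF_fst[OF LG] lwF_obj[OF LF] by simp
next
  fix X u assume X: "X \<in> Obj G" and u: "u \<in> Arr I"
  show "snd (GX (FX X)) u = GM (Cod I u) (FM (Cod I u) (snd X u))"
    using X u lwF_snd[OF LF] lwF_snd[OF LG] lwF_obj[OF LF] by simp
next
  fix X Y f assume f: "(X,Y,f) \<in> Arr G"
  show "GmX (FmX (X,Y,f)) = (GX (FX X), GX (FX Y), lw (Obj I) (\<lambda>i. GM i (FM i (f i))))"
    using lwF_Fm[OF LF f] lwF_Fm[OF LG lwfun_arr[OF LF f]] by simp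
next
  fix i assume i: "i \<in> Obj I"
  have F: "is_functor (C i) (C i) (FO i) (FM i)" and Gf: "is_functor (C i) (C i) (GO i) (GM i)"
    using lwF_fun[OF LF i] lwF_fun[OF LG i] by auto
  show "is_functor (C i) (C i) (\<lambda>A. GO i (FO i A)) (\<lambda>f. GM i (FM i f))"
    unfolding is_functor_def
  proof (intro conjI ballI allI impI)
    fix A assume "A \<in> Obj (C i)" thus "GO i (FO i A) \<in> Obj (C i)" using fun_obj[OF Gf fun_obj[OF F]] by blast
  next
    fix f assume "f \<in> Arr (C i)"
    hence "f \<in> hom (C i) (Dom (C i) f) (Cod (C i) f)" by (simp add: hom_iff)
    thus "GM i (FM i f) \<in> hom (C i) (GO i (FO i (Dom (C i) f))) (GO i (FO i (Cod (C i) f)))"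
      using fun_hom[OF Gf fun_hom[OF F]] by blast
  next
    fix A assume "A \<in> Obj (C i)"
    thus "GM i (FM i (Idm (C i) A)) = Idm (C i) (GO i (FO i A))" using F Gf fun_id fun_obj by metis
  next
    fix f g assume fg: "f \<in> Arr (C i) \<and> g \<in> Arr (C i) \<and> Cod (C i) f = Dom (C i) g"
    hence a: "f \<in> hom (C i) (Dom (C i) f) (Cod (C i) f)" "g \<in> hom (C i) (Cod (C i) f) (Cod (C i) g)"
      by (auto simp: hom_iff)
    show "GM i (FM i (Comp (C i) g f)) = Comp (C i) (GM i (FM i g)) (GM i (FM i f))"
      using fun_comp[OF F a] fun_comp[OF Gf fun_hom[OF F a(1)] fun_hom[OF F a(2)]] by simp
  qed
next
  fix u A assume u: "u \<in> Arr I" and A: "A \<in> Obj (C (Dom I u))"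
  show "Fo u (GO (Dom I u) (FO (Dom I u) A)) = GO (Cod I u) (FO (Cod I u) (Fo u A))"
    using lwF_Fo[OF LF u A] lwF_Fo[OF LG u] fun_obj[OF lwF_fun[OF LF dI[OF u]] A] by simp
next
  fix u f assume u: "u \<in> Arr I" and f: "f \<in> Arr (C (Dom I u))"
  have "f \<in> hom (C (Dom I u)) (Dom (C (Dom I u)) f) (Cod (C (Dom I u)) f)" using f by (simp add: hom_iff)
  from fun_hom[OF lwF_fun[OF LF dI[OF u]] this]
  have FA: "FM (Dom I u) f \<in> Arr (C (Dom I u))" by (simp add: hom_iff)
  show "Fm u (GM (Dom I u) (FM (Dom I u) f)) = GM (Cod I u) (FM (Cod I u) (Fm u f))"
    using lwF_FmM[OF LG u FA] lwF_FmM[OF LF u f] by (simp only:)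
qed

lemma lwfun_P2: "lwfun (\<lambda>X. gP (gP X)) (\<lambda>f. PM GP (PM GP f)) (\<lambda>i A. PO (S i) (PO (S i) A)) (\<lambda>i f. PM (S i) (PM (S i) f))"
  by (rule lwfun_comp[OF lwfun_P lwfun_P])

end




lemma lw_fun: "lw X f = h \<Longrightarrow> x \<in> X \<Longrightarrow> f x = h x"
  by (metis lw_in)

context category begin

lemma pb_unique:
  assumes pb: "is_pullback C u v Q q1 q2" and h: "h \<in> hom C Z Q" and h': "h' \<in> hom C Z Q"
    and e1: "Comp C q1 h = Comp C q1 h'" and e2: "Comp C q2 h = Comp C q2 h'"
  shows "h = h'"
proof -
  have u: "u \<in> hom C (Dom C u) (Cod C u)" and v: "v \<in> hom C (Dom C v) (Cod C u)"
    and q1: "q1 \<in> hom C Q (Dom C u)" and q2: "q2 \<in> hom C Q (Dom C v)"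
    and sq: "Comp C u q1 = Comp C v q2"
    using pb by (auto simp: is_pullback_def hom_iff)
  have "Comp C u (Comp C q1 h) = Comp C v (Comp C q2 h)"
    using assoc[OF h q1 u] assoc[OF h q2 v] sq by simp
  moreover have "Z \<in> Obj C" using h hom_dom by blast
  moreover have "Comp C q1 h \<in> hom C Z (Dom C u)" "Comp C q2 h \<in> hom C Z (Dom C v)"
    using comp_hom h q1 q2 by blast+
  ultimately have "\<exists>!k. k \<in> hom C Z Q \<and> Comp C q1 k = Comp C q1 h \<and> Comp C q2 k = Comp C q2 h"
    using pb unfolding is_pullback_def by blast
  thus ?thesis using h h' e1 e2 by metis
qed

lemma pb_ex:
  assumes pb: "is_pullback C u v Q q1 q2" and Z: "Z \<in> Obj C"
    and f: "f \<in> hom C Z (Dom C u)" and g: "g \<in> hom C Z (Dom C v)" and fg: "Comp C u f = Comp C v g"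
  shows "\<exists>!h. h \<in> hom C Z Q \<and> Comp C q1 h = f \<and> Comp C q2 h = g"
  using assms unfolding is_pullback_def by blast

lemma prod_unique:
  assumes pr: "is_product C A B X p1 p2" and h: "h \<in> hom C Z X" and h': "h' \<in> hom C Z X"
    and e1: "Comp C p1 h = Comp C p1 h'" and e2: "Comp C p2 h = Comp C p2 h'"
  shows "h = h'"
proof -
  have p1: "p1 \<in> hom C X A" and p2: "p2 \<in> hom C X B" using pr by (auto simp: is_product_def)
  have "Z \<in> Obj C" using h hom_dom by blast
  moreover have "Comp C p1 h \<in> hom C Z A" "Comp C p2 h \<in> hom C Z B"
    using comp_hom h p1 p2 by blast+
  ultimately have "\<exists>!k. k \<in> hom C Z X \<and> Comp C p1 k = Comp C p1 h \<and> Comp C p2 k = Comp C p2 h"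
    using pr unfolding is_product_def by blast
  thus ?thesis using h h' e1 e2 by metis
qed

lemma term_unique: "is_terminal C e \<Longrightarrow> f \<in> hom C Z e \<Longrightarrow> g \<in> hom C Z e \<Longrightarrow> f = g"
  unfolding is_terminal_def using hom_dom by metis

end

context GS begin

lemma Ghom_triple: "F \<in> hom G X Y \<Longrightarrow> \<exists>f. F = (X,Y,f) \<and> (X,Y,f) \<in> Arr G"
  by (cases F) (auto simp: hom_iff)

lemma fhp: "i \<in> Obj I \<Longrightarrow> has_finite_products (C i)"
  using Pc unfolding is_Pcat_def Let_def by blast

subsection \<open>Terminal object\<close>

definition "eo i = (SOME e. is_terminal (C i) e)"
definition "ephi w = (THE t. t \<in> hom (C (Cod I w)) (Fo w (eo (Dom I w))) (eo (Cod I w)))"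
definition "Eobj = (lw (Obj I) eo, lw (Arr I) ephi)"

lemma eo_term: "i \<in> Obj I \<Longrightarrow> is_terminal (C i) (eo i)"
  unfolding eo_def using fhp[unfolded has_finite_products_def] by (metis someI_ex)

lemma Eobj_in: "Eobj \<in> Obj G"
proof -
  have "(lw (Obj I) eo, lw (Arr I) ephi) \<in> Obj G"
  proof (rule GobjI)
    fix i assume "i \<in> Obj I" thus "lw (Obj I) eo i \<in> Obj (C i)" using eo_term by (simp add: is_terminal_def)
  next
    fix w assume w: "w \<in> Arr I"
    have "Fo w (eo (Dom I w)) \<in> Obj (C (Cod I w))" using Fo_obj w eo_term dI by (simp add: is_terminal_def)
    hence "\<exists>!t. t \<in> hom (C (Cod I w)) (Fo w (eo (Dom I w))) (eo (Cod I w))"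
      using eo_term[OF cI[OF w]] unfolding is_terminal_def by blast
    hence "ephi w \<in> hom (C (Cod I w)) (Fo w (eo (Dom I w))) (eo (Cod I w))"
      unfolding ephi_def by (rule theI')
    thus "lw (Arr I) ephi w \<in> hom (C (Cod I w)) (Fo w (lw (Obj I) eo (Dom I w))) (lw (Obj I) eo (Cod I w))"
      using w dI cI by simp
  qed auto
  thus ?thesis by (simp add: Eobj_def)
qed

lemma Eobj_fst: "i \<in> Obj I \<Longrightarrow> fst Eobj i = eo i" by (simp add: Eobj_def)

lemma Eobj_term: "is_terminal G Eobj"
proof -
  have "\<exists>!t. t \<in> hom G Z Eobj" if Z: "Z \<in> Obj G" for Z
  proof -
    define m where "m i = (THE t. t \<in> hom (C i) (fst Z i) (eo i))" for i
    have m: "m i \<in> hom (C i) (fst Z i) (eo i)" if i: "i \<in> Obj I" for i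
    proof -
      have "\<exists>!t. t \<in> hom (C i) (fst Z i) (eo i)" using eo_term[OF i] Gobj_lv[OF Z i] unfolding is_terminal_def by blast
      thus ?thesis unfolding m_def by (rule theI')
    qed
    have M: "(Z, Eobj, lw (Obj I) m) \<in> Arr G"
    proof (rule GarrI[OF Z Eobj_in])
      fix i assume "i \<in> Obj I" thus "lw (Obj I) m i \<in> hom (C i) (fst Z i) (fst Eobj i)" using m Eobj_fst by simp
    next
      fix w assume w: "w \<in> Arr I"
      let ?i = "Dom I w" and ?j = "Cod I w"
      have i: "?i \<in> Obj I" and j: "?j \<in> Obj I" using w dI cI by auto
      interpret Cj: category "C ?j" using catC j .
      have a: "Comp (C ?j) (m ?j) (snd Z w) \<in> hom (C ?j) (Fo w (fst Z ?i)) (eo ?j)"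
        using Cj.comp_hom[OF Gobj_phi[OF Z w] m[OF j]] .
      have b: "Comp (C ?j) (snd Eobj w) (Fm w (m ?i)) \<in> hom (C ?j) (Fo w (fst Z ?i)) (eo ?j)"
        using Cj.comp_hom[OF Fm_hom[OF w m[OF i]] Gobj_phi[OF Eobj_in w, unfolded Eobj_fst[OF i] Eobj_fst[OF j]]] .
      show "Comp (C ?j) (lw (Obj I) m ?j) (snd Z w) = Comp (C ?j) (snd Eobj w) (Fm w (lw (Obj I) m ?i))"
        using Cj.term_unique[OF eo_term[OF j] a b] i j by simp
    qed simp
    show ?thesis
    proof (rule ex1I[of _ "(Z, Eobj, lw (Obj I) m)"])
      show "(Z, Eobj, lw (Obj I) m) \<in> hom G Z Eobj" using M by (simp add: hom_iff)
    next
      fix t assume t: "t \<in> hom G Z Eobj"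
      then obtain f where tf: "t = (Z, Eobj, f)" and f: "(Z, Eobj, f) \<in> Arr G" using Ghom_triple by blast
      have "f = lw (Obj I) m"
      proof (rule ext)
        fix i show "f i = lw (Obj I) m i"
        proof (cases "i \<in> Obj I")
          case True
          thus ?thesis using category.term_unique[OF catC[OF True] eo_term[OF True] _ m[OF True], of "f i"]
            GarrD(3)[OF f True] Eobj_fst[OF True] by simp
        qed (use GarrD(4)[OF f] in simp)
      qed
      thus "t = (Z, Eobj, lw (Obj I) m)" using tf by simp
    qed
  qed
  thus ?thesis using Eobj_in unfolding is_terminal_def by blast
qed

lemma term_lv:
  assumes e: "is_terminal G e" and i: "i \<in> Obj I"
  shows "is_terminal (C i) (fst e i)"
proof -
  have eO: "e \<in> Obj G" using e by (simp add: is_terminal_def)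
  obtain h where h: "h \<in> hom G Eobj e" using e Eobj_in unfolding is_terminal_def by blast
  obtain h' where h': "h' \<in> hom G e Eobj" using Eobj_term eO unfolding is_terminal_def by blast
  have hh: "Comp G h h' = Idm G e"
    using G.term_unique[OF e G.comp_hom[OF h' h] G.id_hom[OF eO]] .
  obtain hf where hf: "h = (Eobj, e, hf)" "(Eobj, e, hf) \<in> Arr G" using Ghom_triple h by blast
  obtain hf' where hf': "h' = (e, Eobj, hf')" "(e, Eobj, hf') \<in> Arr G" using Ghom_triple h' by blast
  have "Comp (C i) (hf i) (hf' i) = Idm (C i) (fst e i)"
    using hh hf hf' i by (auto simp: G_Idm dest: lw_fun)
  thus ?thesis
    using category.term_transport[OF catC[OF i] eo_term[OF i] Gobj_lv[OF eO i]] GarrD(3)[OF hf(2) i]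
      GarrD(3)[OF hf'(2) i] Eobj_fst[OF i] by simp
qed


subsection \<open>Lifting levelwise universal maps\<close>

lemma lift_arr:
  assumes Z: "Z \<in> Obj G" and X: "X \<in> Obj G"
    and f1: "(X,A,f1) \<in> Arr G" and f2: "(X,B,f2) \<in> Arr G"
    and f: "(Z,A,f) \<in> Arr G" and g: "(Z,B,g) \<in> Arr G"
    and m: "\<And>i. i \<in> Obj I \<Longrightarrow> m i \<in> hom (C i) (fst Z i) (fst X i) \<and> Comp (C i) (f1 i) (m i) = f i \<and> Comp (C i) (f2 i) (m i) = g i"
    and mono: "\<And>j h h' Y. j \<in> Obj I \<Longrightarrow> h \<in> hom (C j) Y (fst X j) \<Longrightarrow> h' \<in> hom (C j) Y (fst X j) \<Longrightarrow>
        Comp (C j) (f1 j) h = Comp (C j) (f1 j) h' \<Longrightarrow> Comp (C j) (f2 j) h = Comp (C j) (f2 j) h' \<Longrightarrow> h = h'"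
  shows "(Z, X, lw (Obj I) m) \<in> Arr G"
proof (rule GarrI[OF Z X])
  fix i assume "i \<in> Obj I" thus "lw (Obj I) m i \<in> hom (C i) (fst Z i) (fst X i)" using m by simp
next
  fix w assume w: "w \<in> Arr I"
  let ?i = "Dom I w" and ?j = "Cod I w"
  have i: "?i \<in> Obj I" and j: "?j \<in> Obj I" using w dI cI by auto
  interpret Cj: category "C ?j" using catC j .
  have A: "A \<in> Obj G" and B: "B \<in> Obj G" using GarrD f1 f2 by auto
  have pZ: "snd Z w \<in> hom (C ?j) (Fo w (fst Z ?i)) (fst Z ?j)" using Gobj_phi Z w by blast
  have pX: "snd X w \<in> hom (C ?j) (Fo w (fst X ?i)) (fst X ?j)" using Gobj_phi X w by blast
  have pA: "snd A w \<in> hom (C ?j) (Fo w (fst A ?i)) (fst A ?j)" using Gobj_phi A w by blast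
  have pB: "snd B w \<in> hom (C ?j) (Fo w (fst B ?i)) (fst B ?j)" using Gobj_phi B w by blast
  have mi: "m ?i \<in> hom (C ?i) (fst Z ?i) (fst X ?i)" and mj: "m ?j \<in> hom (C ?j) (fst Z ?j) (fst X ?j)"
    using m i j by auto
  have Fmi: "Fm w (m ?i) \<in> hom (C ?j) (Fo w (fst Z ?i)) (Fo w (fst X ?i))" using Fm_hom w mi by blast
  have h1: "Comp (C ?j) (m ?j) (snd Z w) \<in> hom (C ?j) (Fo w (fst Z ?i)) (fst X ?j)"
    using Cj.comp_hom[OF pZ mj] .
  have h2: "Comp (C ?j) (snd X w) (Fm w (m ?i)) \<in> hom (C ?j) (Fo w (fst Z ?i)) (fst X ?j)"
    using Cj.comp_hom[OF Fmi pX] .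
  have gen: "Comp (C ?j) (k ?j) (Comp (C ?j) (m ?j) (snd Z w)) = Comp (C ?j) (k ?j) (Comp (C ?j) (snd X w) (Fm w (m ?i)))"
    if k: "(X,Y,k) \<in> Arr G" and l: "(Z,Y,l) \<in> Arr G"
      and km: "\<And>i. i \<in> Obj I \<Longrightarrow> Comp (C i) (k i) (m i) = l i" for Y k l
  proof -
    have Y: "Y \<in> Obj G" using GarrD k by auto
    have pY: "snd Y w \<in> hom (C ?j) (Fo w (fst Y ?i)) (fst Y ?j)" using Gobj_phi Y w by blast
    have ki: "k ?i \<in> hom (C ?i) (fst X ?i) (fst Y ?i)" and kj: "k ?j \<in> hom (C ?j) (fst X ?j) (fst Y ?j)"
      using GarrD(3)[OF k] i j by auto
    have Fki: "Fm w (k ?i) \<in> hom (C ?j) (Fo w (fst X ?i)) (Fo w (fst Y ?i))" using Fm_hom w ki by blast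
    have "Comp (C ?j) (k ?j) (Comp (C ?j) (m ?j) (snd Z w)) = Comp (C ?j) (Comp (C ?j) (k ?j) (m ?j)) (snd Z w)"
      using Cj.assoc[OF pZ mj kj] .
    also have "\<dots> = Comp (C ?j) (l ?j) (snd Z w)" using km j by simp
    also have "\<dots> = Comp (C ?j) (snd Y w) (Fm w (l ?i))" using GarrD(5)[OF l w] .
    also have "\<dots> = Comp (C ?j) (snd Y w) (Fm w (Comp (C ?i) (k ?i) (m ?i)))" using km i by simp
    also have "\<dots> = Comp (C ?j) (snd Y w) (Comp (C ?j) (Fm w (k ?i)) (Fm w (m ?i)))" using Fm_comp[OF w mi ki] by simp
    also have "\<dots> = Comp (C ?j) (Comp (C ?j) (snd Y w) (Fm w (k ?i))) (Fm w (m ?i))" using Cj.assoc[OF Fmi Fki pY] .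
    also have "\<dots> = Comp (C ?j) (Comp (C ?j) (k ?j) (snd X w)) (Fm w (m ?i))" using GarrD(5)[OF k w] by simp
    also have "\<dots> = Comp (C ?j) (k ?j) (Comp (C ?j) (snd X w) (Fm w (m ?i)))" using Cj.assoc[OF Fmi pX kj] by simp
    finally show ?thesis .
  qed
  have e1: "Comp (C ?j) (f1 ?j) (Comp (C ?j) (m ?j) (snd Z w)) = Comp (C ?j) (f1 ?j) (Comp (C ?j) (snd X w) (Fm w (m ?i)))"
    using gen[OF f1 f] m by blast
  have e2: "Comp (C ?j) (f2 ?j) (Comp (C ?j) (m ?j) (snd Z w)) = Comp (C ?j) (f2 ?j) (Comp (C ?j) (snd X w) (Fm w (m ?i)))"
    using gen[OF f2 g] m by blast
  show "Comp (C ?j) (lw (Obj I) m ?j) (snd Z w) = Comp (C ?j) (snd X w) (Fm w (lw (Obj I) m ?i))"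
    using mono[OF j h1 h2 e1 e2] i j by simp
qed simp

lemma lift_unique:
  assumes k: "(Z,X,k) \<in> Arr G" and f1: "(X,A,f1) \<in> Arr G" and f2: "(X,B,f2) \<in> Arr G"
    and e1: "Comp G (X,A,f1) (Z,X,k) = (Z,A,f)" and e2: "Comp G (X,B,f2) (Z,X,k) = (Z,B,g)"
    and m: "\<And>i. i \<in> Obj I \<Longrightarrow> m i \<in> hom (C i) (fst Z i) (fst X i) \<and> Comp (C i) (f1 i) (m i) = f i \<and> Comp (C i) (f2 i) (m i) = g i"
    and mono: "\<And>j h h' Y. j \<in> Obj I \<Longrightarrow> h \<in> hom (C j) Y (fst X j) \<Longrightarrow> h' \<in> hom (C j) Y (fst X j) \<Longrightarrow>
        Comp (C j) (f1 j) h = Comp (C j) (f1 j) h' \<Longrightarrow> Comp (C j) (f2 j) h = Comp (C j) (f2 j) h' \<Longrightarrow> h = h'"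
  shows "k = lw (Obj I) m"
proof (rule ext)
  fix i show "k i = lw (Obj I) m i"
  proof (cases "i \<in> Obj I")
    case True
    have a: "Comp (C i) (f1 i) (k i) = f i" using e1 True by (auto dest: lw_fun)
    have b: "Comp (C i) (f2 i) (k i) = g i" using e2 True by (auto dest: lw_fun)
    show ?thesis using mono[OF True GarrD(3)[OF k True], of "m i"] m[OF True] a b True by simp
  qed (use GarrD(4)[OF k] in simp)
qed

subsection \<open>Products\<close>

definition "prl A B i = (SOME t. is_product (C i) (fst A i) (fst B i) (fst t) (fst (snd t)) (snd (snd t)))"
definition "Xo A B i = fst (prl A B i)"
definition "p1o A B i = fst (snd (prl A B i))"
definition "p2o A B i = snd (snd (prl A B i))"
definition "xphi A B w = (THE h. h \<in> hom (C (Cod I w)) (Fo w (Xo A B (Dom I w))) (Xo A B (Cod I w)) \<and>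
    Comp (C (Cod I w)) (p1o A B (Cod I w)) h = Comp (C (Cod I w)) (snd A w) (Fm w (p1o A B (Dom I w))) \<and>
    Comp (C (Cod I w)) (p2o A B (Cod I w)) h = Comp (C (Cod I w)) (snd B w) (Fm w (p2o A B (Dom I w))))"
definition "PrO A B = (lw (Obj I) (Xo A B), lw (Arr I) (xphi A B))"

context
  fixes A B assumes A: "A \<in> Obj G" and B: "B \<in> Obj G"
begin

lemma prl_prod: "i \<in> Obj I \<Longrightarrow> is_product (C i) (fst A i) (fst B i) (Xo A B i) (p1o A B i) (p2o A B i)"
proof -
  assume i: "i \<in> Obj I"
  have "\<exists>X p1 p2. is_product (C i) (fst A i) (fst B i) X p1 p2"
    using fhp[OF i] Gobj_lv[OF A i] Gobj_lv[OF B i] unfolding has_finite_products_def by blast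
  hence "\<exists>t. is_product (C i) (fst A i) (fst B i) (fst t) (fst (snd t)) (snd (snd t))" by auto
  from someI_ex[OF this] show ?thesis unfolding Xo_def p1o_def p2o_def prl_def .
qed

lemma xphi_prop:
  assumes w: "w \<in> Arr I"
  shows "xphi A B w \<in> hom (C (Cod I w)) (Fo w (Xo A B (Dom I w))) (Xo A B (Cod I w)) \<and>
    Comp (C (Cod I w)) (p1o A B (Cod I w)) (xphi A B w) = Comp (C (Cod I w)) (snd A w) (Fm w (p1o A B (Dom I w))) \<and>
    Comp (C (Cod I w)) (p2o A B (Cod I w)) (xphi A B w) = Comp (C (Cod I w)) (snd B w) (Fm w (p2o A B (Dom I w)))"
proof -
  let ?i = "Dom I w" and ?j = "Cod I w"
  have i: "?i \<in> Obj I" and j: "?j \<in> Obj I" using w dI cI by auto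
  interpret Cj: category "C ?j" using catC j .
  have Pi: "is_product (C ?i) (fst A ?i) (fst B ?i) (Xo A B ?i) (p1o A B ?i) (p2o A B ?i)" using prl_prod i .
  have Pj: "is_product (C ?j) (fst A ?j) (fst B ?j) (Xo A B ?j) (p1o A B ?j) (p2o A B ?j)" using prl_prod j .
  have Xi: "Xo A B ?i \<in> Obj (C ?i)" and p1: "p1o A B ?i \<in> hom (C ?i) (Xo A B ?i) (fst A ?i)"
    and p2: "p2o A B ?i \<in> hom (C ?i) (Xo A B ?i) (fst B ?i)" using Pi by (auto simp: is_product_def)
  have "Comp (C ?j) (snd A w) (Fm w (p1o A B ?i)) \<in> hom (C ?j) (Fo w (Xo A B ?i)) (fst A ?j)"
    using Cj.comp_hom[OF Fm_hom[OF w p1] Gobj_phi[OF A w]] .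
  moreover have "Comp (C ?j) (snd B w) (Fm w (p2o A B ?i)) \<in> hom (C ?j) (Fo w (Xo A B ?i)) (fst B ?j)"
    using Cj.comp_hom[OF Fm_hom[OF w p2] Gobj_phi[OF B w]] .
  moreover have "Fo w (Xo A B ?i) \<in> Obj (C ?j)" using Fo_obj w Xi by blast
  ultimately have "\<exists>!h. h \<in> hom (C ?j) (Fo w (Xo A B ?i)) (Xo A B ?j) \<and>
    Comp (C ?j) (p1o A B ?j) h = Comp (C ?j) (snd A w) (Fm w (p1o A B ?i)) \<and>
    Comp (C ?j) (p2o A B ?j) h = Comp (C ?j) (snd B w) (Fm w (p2o A B ?i))"
    using Pj unfolding is_product_def by blast
  from theI'[OF this] show ?thesis unfolding xphi_def .
qed

lemma PrO_in: "PrO A B \<in> Obj G"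
proof -
  have "(lw (Obj I) (Xo A B), lw (Arr I) (xphi A B)) \<in> Obj G"
  proof (rule GobjI)
    fix i assume "i \<in> Obj I" thus "lw (Obj I) (Xo A B) i \<in> Obj (C i)" using prl_prod by (simp add: is_product_def)
  next
    fix w assume w: "w \<in> Arr I"
    thus "lw (Arr I) (xphi A B) w \<in> hom (C (Cod I w)) (Fo w (lw (Obj I) (Xo A B) (Dom I w))) (lw (Obj I) (Xo A B) (Cod I w))"
      using xphi_prop[OF w] dI cI by simp
  qed auto
  thus ?thesis by (simp add: PrO_def)
qed

lemma PrO_fst: "i \<in> Obj I \<Longrightarrow> fst (PrO A B) i = Xo A B i" by (simp add: PrO_def)
lemma PrO_snd: "w \<in> Arr I \<Longrightarrow> snd (PrO A B) w = xphi A B w" by (simp add: PrO_def)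

lemma Pr1_arr: "(PrO A B, A, lw (Obj I) (p1o A B)) \<in> Arr G"
proof (rule GarrI[OF PrO_in A])
  fix i assume "i \<in> Obj I" thus "lw (Obj I) (p1o A B) i \<in> hom (C i) (fst (PrO A B) i) (fst A i)"
    using prl_prod PrO_fst by (simp add: is_product_def)
next
  fix w assume w: "w \<in> Arr I" thus "Comp (C (Cod I w)) (lw (Obj I) (p1o A B) (Cod I w)) (snd (PrO A B) w) =
         Comp (C (Cod I w)) (snd A w) (Fm w (lw (Obj I) (p1o A B) (Dom I w)))"
    using xphi_prop[OF w] PrO_snd dI cI by simp
qed simp

lemma Pr2_arr: "(PrO A B, B, lw (Obj I) (p2o A B)) \<in> Arr G"
proof (rule GarrI[OF PrO_in B])
  fix i assume "i \<in> Obj I" thus "lw (Obj I) (p2o A B) i \<in> hom (C i) (fst (PrO A B) i) (fst B i)"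
    using prl_prod PrO_fst by (simp add: is_product_def)
next
  fix w assume w: "w \<in> Arr I" thus "Comp (C (Cod I w)) (lw (Obj I) (p2o A B) (Cod I w)) (snd (PrO A B) w) =
         Comp (C (Cod I w)) (snd B w) (Fm w (lw (Obj I) (p2o A B) (Dom I w)))"
    using xphi_prop[OF w] PrO_snd dI cI by simp
qed simp

end

lemma R_prod:
  assumes X: "X \<in> Obj G" and f1: "(X,A,f1) \<in> Arr G" and f2: "(X,B,f2) \<in> Arr G"
    and lv: "\<And>i. i \<in> Obj I \<Longrightarrow> is_product (C i) (fst A i) (fst B i) (fst X i) (f1 i) (f2 i)"
  shows "is_product G A B X (X,A,f1) (X,B,f2)"
proof -
  have mono: "h = h'" if "j \<in> Obj I" "h \<in> hom (C j) Y (fst X j)" "h' \<in> hom (C j) Y (fst X j)"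
      "Comp (C j) (f1 j) h = Comp (C j) (f1 j) h'" "Comp (C j) (f2 j) h = Comp (C j) (f2 j) h'" for j h h' Y
    using category.prod_unique[OF catC[OF that(1)] lv[OF that(1)] that(2-5)] .
  have "\<exists>!k. k \<in> hom G Z X \<and> Comp G (X,A,f1) k = F \<and> Comp G (X,B,f2) k = H"
    if Z: "Z \<in> Obj G" and F: "F \<in> hom G Z A" and H: "H \<in> hom G Z B" for Z F H
  proof -
    obtain f where Ff: "F = (Z,A,f)" and f: "(Z,A,f) \<in> Arr G" using Ghom_triple F by blast
    obtain g where Hg: "H = (Z,B,g)" and g: "(Z,B,g) \<in> Arr G" using Ghom_triple H by blast
    define m where "m i = (THE h. h \<in> hom (C i) (fst Z i) (fst X i) \<and> Comp (C i) (f1 i) h = f i \<and> Comp (C i) (f2 i) h = g i)" for i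
    have m: "m i \<in> hom (C i) (fst Z i) (fst X i) \<and> Comp (C i) (f1 i) (m i) = f i \<and> Comp (C i) (f2 i) (m i) = g i"
      if i: "i \<in> Obj I" for i
    proof -
      have "\<exists>!h. h \<in> hom (C i) (fst Z i) (fst X i) \<and> Comp (C i) (f1 i) h = f i \<and> Comp (C i) (f2 i) h = g i"
        using lv[OF i] Gobj_lv[OF Z i] GarrD(3)[OF f i] GarrD(3)[OF g i] unfolding is_product_def by blast
      from theI'[OF this] show ?thesis unfolding m_def .
    qed
    have M: "(Z, X, lw (Obj I) m) \<in> Arr G" by (rule lift_arr[OF Z X f1 f2 f g], rule m, assumption, rule mono, assumption+)
    show ?thesis
    proof (rule ex1I[of _ "(Z, X, lw (Obj I) m)"])
      have "lw (Obj I) (\<lambda>i. Comp (C i) (f1 i) (lw (Obj I) m i)) = f"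
        "lw (Obj I) (\<lambda>i. Comp (C i) (f2 i) (lw (Obj I) m i)) = g"
        using m GarrD(4)[OF f] GarrD(4)[OF g] by (auto intro!: lw_eqI)
      thus "(Z, X, lw (Obj I) m) \<in> hom G Z X \<and> Comp G (X, A, f1) (Z, X, lw (Obj I) m) = F \<and>
          Comp G (X, B, f2) (Z, X, lw (Obj I) m) = H" using M Ff Hg by (simp add: hom_iff)
    next
      fix k assume k: "k \<in> hom G Z X \<and> Comp G (X, A, f1) k = F \<and> Comp G (X, B, f2) k = H"
      then obtain kf where kk: "k = (Z,X,kf)" "(Z,X,kf) \<in> Arr G" using Ghom_triple by blast
      have "kf = lw (Obj I) m" by (rule lift_unique[OF kk(2) f1 f2], use k kk Ff Hg in simp, use k kk Ff Hg in simp, rule m, assumption, rule mono, assumption+)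
      thus "k = (Z, X, lw (Obj I) m)" using kk by simp
    qed
  qed
  moreover have "(X,A,f1) \<in> hom G X A" "(X,B,f2) \<in> hom G X B" using f1 f2 by (simp_all add: hom_iff)
  ultimately show ?thesis unfolding is_product_def using X by blast
qed

lemma Pr_prod: "A \<in> Obj G \<Longrightarrow> B \<in> Obj G \<Longrightarrow>
  is_product G A B (PrO A B) (PrO A B, A, lw (Obj I) (p1o A B)) (PrO A B, B, lw (Obj I) (p2o A B))"
  by (rule R_prod[OF PrO_in Pr1_arr Pr2_arr]) (auto simp: PrO_fst prl_prod)

lemma L_prod:
  assumes P: "is_product G A B X p1 p2"
  shows "\<exists>f1 f2. p1 = (X,A,f1) \<and> p2 = (X,B,f2) \<and> (X,A,f1) \<in> Arr G \<and> (X,B,f2) \<in> Arr G \<and>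
     (\<forall>i\<in>Obj I. is_product (C i) (fst A i) (fst B i) (fst X i) (f1 i) (f2 i))"
proof -
  have X: "X \<in> Obj G" and p1: "p1 \<in> hom G X A" and p2: "p2 \<in> hom G X B" using P by (auto simp: is_product_def)
  have A: "A \<in> Obj G" and B: "B \<in> Obj G" using G.hom_cod p1 p2 by auto
  obtain f1 where f1: "p1 = (X,A,f1)" "(X,A,f1) \<in> Arr G" using Ghom_triple p1 by blast
  obtain f2 where f2: "p2 = (X,B,f2)" "(X,B,f2) \<in> Arr G" using Ghom_triple p2 by blast
  let ?X' = "PrO A B" and ?q1 = "(PrO A B, A, lw (Obj I) (p1o A B))" and ?q2 = "(PrO A B, B, lw (Obj I) (p2o A B))"
  have P': "is_product G A B ?X' ?q1 ?q2" using Pr_prod A B .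
  have q1: "?q1 \<in> hom G ?X' A" and q2: "?q2 \<in> hom G ?X' B" using P' by (auto simp: is_product_def)
  obtain h where h: "h \<in> hom G ?X' X" "Comp G p1 h = ?q1" "Comp G p2 h = ?q2"
    using P PrO_in[OF A B] q1 q2 unfolding is_product_def by metis
  obtain h' where h': "h' \<in> hom G X ?X'" "Comp G ?q1 h' = p1" "Comp G ?q2 h' = p2"
    using P' X p1 p2 unfolding is_product_def by metis
  have hh: "Comp G h h' = Idm G X"
  proof (rule G.prod_unique[OF P G.comp_hom[OF h'(1) h(1)] G.id_hom[OF X]])
    show "Comp G p1 (Comp G h h') = Comp G p1 (Idm G X)"
      using G.assoc[OF h'(1) h(1) p1] h h' G.id_right[OF p1] by simp
    show "Comp G p2 (Comp G h h') = Comp G p2 (Idm G X)"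
      using G.assoc[OF h'(1) h(1) p2] h h' G.id_right[OF p2] by simp
  qed
  obtain hf where hf: "h = (?X', X, hf)" "(?X', X, hf) \<in> Arr G" using Ghom_triple h(1) by blast
  obtain hf' where hf': "h' = (X, ?X', hf')" "(X, ?X', hf') \<in> Arr G" using Ghom_triple h'(1) by blast
  have "is_product (C i) (fst A i) (fst B i) (fst X i) (f1 i) (f2 i)" if i: "i \<in> Obj I" for i
  proof (rule category.prod_transport[OF catC[OF i] prl_prod[OF A B i] Gobj_lv[OF X i]])
    show "f1 i \<in> hom (C i) (fst X i) (fst A i)" "f2 i \<in> hom (C i) (fst X i) (fst B i)"
      using GarrD(3)[OF f1(2) i] GarrD(3)[OF f2(2) i] by auto
    show "hf i \<in> hom (C i) (Xo A B i) (fst X i)" using GarrD(3)[OF hf(2) i] PrO_fst[OF A B i] by simp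
    show "hf' i \<in> hom (C i) (fst X i) (Xo A B i)" using GarrD(3)[OF hf'(2) i] PrO_fst[OF A B i] by simp
    show "Comp (C i) (hf i) (hf' i) = Idm (C i) (fst X i)" using hh hf hf' i by (auto simp: G_Idm dest: lw_fun)
    show "Comp (C i) (f1 i) (hf i) = p1o A B i" using h(2) f1 hf i by (auto dest: lw_fun)
    show "Comp (C i) (f2 i) (hf i) = p2o A B i" using h(3) f2 hf i by (auto dest: lw_fun)
    show "Comp (C i) (p1o A B i) (hf' i) = f1 i" using h'(2) f1 hf' i by (auto dest: lw_fun)
    show "Comp (C i) (p2o A B i) (hf' i) = f2 i" using h'(3) f2 hf' i by (auto dest: lw_fun)
  qed
  thus ?thesis using f1 f2 by blast
qed


subsection \<open>Pullbacks\<close>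

definition "pbl a b i = (SOME t. is_pullback (C i) (a i) (b i) (fst t) (fst (snd t)) (snd (snd t)))"
definition "Qo a b i = fst (pbl a b i)"
definition "q1o a b i = fst (snd (pbl a b i))"
definition "q2o a b i = snd (snd (pbl a b i))"
definition "qphi A B a b w = (THE h. h \<in> hom (C (Cod I w)) (Fo w (Qo a b (Dom I w))) (Qo a b (Cod I w)) \<and>
    Comp (C (Cod I w)) (q1o a b (Cod I w)) h = Comp (C (Cod I w)) (snd A w) (Fm w (q1o a b (Dom I w))) \<and>
    Comp (C (Cod I w)) (q2o a b (Cod I w)) h = Comp (C (Cod I w)) (snd B w) (Fm w (q2o a b (Dom I w))))"
definition "PbO A B a b = (lw (Obj I) (Qo a b), lw (Arr I) (qphi A B a b))"

context
  fixes A B D a b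
  assumes ua: "(A,D,a) \<in> Arr G" and vb: "(B,D,b) \<in> Arr G"
    and ex: "\<And>i. i \<in> Obj I \<Longrightarrow> \<exists>Q q1 q2. is_pullback (C i) (a i) (b i) Q q1 q2"
begin

lemma pbl_pb: "i \<in> Obj I \<Longrightarrow> is_pullback (C i) (a i) (b i) (Qo a b i) (q1o a b i) (q2o a b i)"
proof -
  assume i: "i \<in> Obj I"
  have "\<exists>t. is_pullback (C i) (a i) (b i) (fst t) (fst (snd t)) (snd (snd t))" using ex[OF i] by auto
  from someI_ex[OF this] show ?thesis unfolding Qo_def q1o_def q2o_def pbl_def .
qed

lemma pbl_homs: assumes i: "i \<in> Obj I"
  shows "Qo a b i \<in> Obj (C i)" "q1o a b i \<in> hom (C i) (Qo a b i) (fst A i)" "q2o a b i \<in> hom (C i) (Qo a b i) (fst B i)"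
    "Comp (C i) (a i) (q1o a b i) = Comp (C i) (b i) (q2o a b i)"
  using pbl_pb[OF i] GarrD(3)[OF ua i] GarrD(3)[OF vb i] by (auto simp: is_pullback_def hom_iff)

lemma qphi_prop:
  assumes w: "w \<in> Arr I"
  shows "qphi A B a b w \<in> hom (C (Cod I w)) (Fo w (Qo a b (Dom I w))) (Qo a b (Cod I w)) \<and>
    Comp (C (Cod I w)) (q1o a b (Cod I w)) (qphi A B a b w) = Comp (C (Cod I w)) (snd A w) (Fm w (q1o a b (Dom I w))) \<and>
    Comp (C (Cod I w)) (q2o a b (Cod I w)) (qphi A B a b w) = Comp (C (Cod I w)) (snd B w) (Fm w (q2o a b (Dom I w)))"
proof -
  let ?i = "Dom I w" and ?j = "Cod I w"
  have i: "?i \<in> Obj I" and j: "?j \<in> Obj I" using w dI cI by auto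
  interpret Cj: category "C ?j" using catC j .
  have A: "A \<in> Obj G" and B: "B \<in> Obj G" and D: "D \<in> Obj G" using GarrD ua vb by auto
  note hi = pbl_homs[OF i]
  have pA: "snd A w \<in> hom (C ?j) (Fo w (fst A ?i)) (fst A ?j)" using Gobj_phi A w by blast
  have pB: "snd B w \<in> hom (C ?j) (Fo w (fst B ?i)) (fst B ?j)" using Gobj_phi B w by blast
  have pD: "snd D w \<in> hom (C ?j) (Fo w (fst D ?i)) (fst D ?j)" using Gobj_phi D w by blast
  have ai: "a ?i \<in> hom (C ?i) (fst A ?i) (fst D ?i)" and aj: "a ?j \<in> hom (C ?j) (fst A ?j) (fst D ?j)"
    using GarrD(3)[OF ua] i j by auto
  have bi: "b ?i \<in> hom (C ?i) (fst B ?i) (fst D ?i)" and bj: "b ?j \<in> hom (C ?j) (fst B ?j) (fst D ?j)"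
    using GarrD(3)[OF vb] i j by auto
  have F1: "Fm w (q1o a b ?i) \<in> hom (C ?j) (Fo w (Qo a b ?i)) (Fo w (fst A ?i))" using Fm_hom[OF w hi(2)] .
  have F2: "Fm w (q2o a b ?i) \<in> hom (C ?j) (Fo w (Qo a b ?i)) (Fo w (fst B ?i))" using Fm_hom[OF w hi(3)] .
  have Fa: "Fm w (a ?i) \<in> hom (C ?j) (Fo w (fst A ?i)) (Fo w (fst D ?i))" using Fm_hom[OF w ai] .
  have Fb: "Fm w (b ?i) \<in> hom (C ?j) (Fo w (fst B ?i)) (Fo w (fst D ?i))" using Fm_hom[OF w bi] .
  have f: "Comp (C ?j) (snd A w) (Fm w (q1o a b ?i)) \<in> hom (C ?j) (Fo w (Qo a b ?i)) (fst A ?j)"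
    using Cj.comp_hom[OF F1 pA] .
  have g: "Comp (C ?j) (snd B w) (Fm w (q2o a b ?i)) \<in> hom (C ?j) (Fo w (Qo a b ?i)) (fst B ?j)"
    using Cj.comp_hom[OF F2 pB] .
  have "Comp (C ?j) (a ?j) (Comp (C ?j) (snd A w) (Fm w (q1o a b ?i))) =
      Comp (C ?j) (Comp (C ?j) (a ?j) (snd A w)) (Fm w (q1o a b ?i))" using Cj.assoc[OF F1 pA aj] .
  also have "\<dots> = Comp (C ?j) (Comp (C ?j) (snd D w) (Fm w (a ?i))) (Fm w (q1o a b ?i))" using GarrD(5)[OF ua w] by simp
  also have "\<dots> = Comp (C ?j) (snd D w) (Comp (C ?j) (Fm w (a ?i)) (Fm w (q1o a b ?i)))" using Cj.assoc[OF F1 Fa pD] by simp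
  also have "\<dots> = Comp (C ?j) (snd D w) (Fm w (Comp (C ?i) (a ?i) (q1o a b ?i)))" using Fm_comp[OF w hi(2) ai] by simp
  also have "\<dots> = Comp (C ?j) (snd D w) (Fm w (Comp (C ?i) (b ?i) (q2o a b ?i)))" using hi(4) by simp
  also have "\<dots> = Comp (C ?j) (snd D w) (Comp (C ?j) (Fm w (b ?i)) (Fm w (q2o a b ?i)))" using Fm_comp[OF w hi(3) bi] by simp
  also have "\<dots> = Comp (C ?j) (Comp (C ?j) (snd D w) (Fm w (b ?i))) (Fm w (q2o a b ?i))" using Cj.assoc[OF F2 Fb pD] .
  also have "\<dots> = Comp (C ?j) (Comp (C ?j) (b ?j) (snd B w)) (Fm w (q2o a b ?i))" using GarrD(5)[OF vb w] by simp
  also have "\<dots> = Comp (C ?j) (b ?j) (Comp (C ?j) (snd B w) (Fm w (q2o a b ?i)))" using Cj.assoc[OF F2 pB bj] by simp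
  finally have sq: "Comp (C ?j) (a ?j) (Comp (C ?j) (snd A w) (Fm w (q1o a b ?i))) =
      Comp (C ?j) (b ?j) (Comp (C ?j) (snd B w) (Fm w (q2o a b ?i)))" .
  have Zo: "Fo w (Qo a b ?i) \<in> Obj (C ?j)" using Fo_obj w hi(1) by blast
  have da: "Dom (C ?j) (a ?j) = fst A ?j" and db: "Dom (C ?j) (b ?j) = fst B ?j" using aj bj by (auto simp: hom_iff)
  have "\<exists>!h. h \<in> hom (C ?j) (Fo w (Qo a b ?i)) (Qo a b ?j) \<and>
    Comp (C ?j) (q1o a b ?j) h = Comp (C ?j) (snd A w) (Fm w (q1o a b ?i)) \<and>
    Comp (C ?j) (q2o a b ?j) h = Comp (C ?j) (snd B w) (Fm w (q2o a b ?i))"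
    using Cj.pb_ex[OF pbl_pb[OF j] Zo] f g sq da db by simp
  from theI'[OF this] show ?thesis unfolding qphi_def .
qed

lemma PbO_in: "PbO A B a b \<in> Obj G"
proof -
  have "(lw (Obj I) (Qo a b), lw (Arr I) (qphi A B a b)) \<in> Obj G"
  proof (rule GobjI)
    fix i assume "i \<in> Obj I" thus "lw (Obj I) (Qo a b) i \<in> Obj (C i)" using pbl_homs by simp
  next
    fix w assume w: "w \<in> Arr I"
    thus "lw (Arr I) (qphi A B a b) w \<in> hom (C (Cod I w)) (Fo w (lw (Obj I) (Qo a b) (Dom I w))) (lw (Obj I) (Qo a b) (Cod I w))"
      using qphi_prop[OF w] dI cI by simp
  qed auto
  thus ?thesis by (simp add: PbO_def)
qed

lemma PbO_fst: "i \<in> Obj I \<Longrightarrow> fst (PbO A B a b) i = Qo a b i" by (simp add: PbO_def)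
lemma PbO_snd: "w \<in> Arr I \<Longrightarrow> snd (PbO A B a b) w = qphi A B a b w" by (simp add: PbO_def)

lemma Pb1_arr: "(PbO A B a b, A, lw (Obj I) (q1o a b)) \<in> Arr G"
proof (rule GarrI[OF PbO_in])
  show "A \<in> Obj G" using GarrD ua by auto
  fix i assume "i \<in> Obj I" thus "lw (Obj I) (q1o a b) i \<in> hom (C i) (fst (PbO A B a b) i) (fst A i)"
    using pbl_homs PbO_fst by simp
next
  fix w assume w: "w \<in> Arr I" thus "Comp (C (Cod I w)) (lw (Obj I) (q1o a b) (Cod I w)) (snd (PbO A B a b) w) =
         Comp (C (Cod I w)) (snd A w) (Fm w (lw (Obj I) (q1o a b) (Dom I w)))"
    using qphi_prop[OF w] PbO_snd dI cI by simp
qed simp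

lemma Pb2_arr: "(PbO A B a b, B, lw (Obj I) (q2o a b)) \<in> Arr G"
proof (rule GarrI[OF PbO_in])
  show "B \<in> Obj G" using GarrD vb by auto
  fix i assume "i \<in> Obj I" thus "lw (Obj I) (q2o a b) i \<in> hom (C i) (fst (PbO A B a b) i) (fst B i)"
    using pbl_homs PbO_fst by simp
next
  fix w assume w: "w \<in> Arr I" thus "Comp (C (Cod I w)) (lw (Obj I) (q2o a b) (Cod I w)) (snd (PbO A B a b) w) =
         Comp (C (Cod I w)) (snd B w) (Fm w (lw (Obj I) (q2o a b) (Dom I w)))"
    using qphi_prop[OF w] PbO_snd dI cI by simp
qed simp

end

lemma R_pb:
  assumes ua: "(A,D,a) \<in> Arr G" and vb: "(B,D,b) \<in> Arr G"
    and X: "X \<in> Obj G" and f1: "(X,A,f1) \<in> Arr G" and f2: "(X,B,f2) \<in> Arr G"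
    and lv: "\<And>i. i \<in> Obj I \<Longrightarrow> is_pullback (C i) (a i) (b i) (fst X i) (f1 i) (f2 i)"
  shows "is_pullback G (A,D,a) (B,D,b) X (X,A,f1) (X,B,f2)"
proof -
  have mono: "h = h'" if "j \<in> Obj I" "h \<in> hom (C j) Y (fst X j)" "h' \<in> hom (C j) Y (fst X j)"
      "Comp (C j) (f1 j) h = Comp (C j) (f1 j) h'" "Comp (C j) (f2 j) h = Comp (C j) (f2 j) h'" for j h h' Y
    using category.pb_unique[OF catC[OF that(1)] lv[OF that(1)] that(2-5)] .
  have sq: "Comp G (A,D,a) (X,A,f1) = Comp G (B,D,b) (X,B,f2)"
    using lv by (auto simp: is_pullback_def intro!: lw_cong2)
  have "\<exists>!k. k \<in> hom G Z X \<and> Comp G (X,A,f1) k = F \<and> Comp G (X,B,f2) k = H"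
    if Z: "Z \<in> Obj G" and F: "F \<in> hom G Z A" and H: "H \<in> hom G Z B"
      and FH: "Comp G (A,D,a) F = Comp G (B,D,b) H" for Z F H
  proof -
    obtain f where Ff: "F = (Z,A,f)" and f: "(Z,A,f) \<in> Arr G" using Ghom_triple F by blast
    obtain g where Hg: "H = (Z,B,g)" and g: "(Z,B,g) \<in> Arr G" using Ghom_triple H by blast
    have fg: "Comp (C i) (a i) (f i) = Comp (C i) (b i) (g i)" if i: "i \<in> Obj I" for i
      using FH Ff Hg i by (auto dest: lw_fun[where x=i])
    define m where "m i = (THE h. h \<in> hom (C i) (fst Z i) (fst X i) \<and> Comp (C i) (f1 i) h = f i \<and> Comp (C i) (f2 i) h = g i)" for i
    have m: "m i \<in> hom (C i) (fst Z i) (fst X i) \<and> Comp (C i) (f1 i) (m i) = f i \<and> Comp (C i) (f2 i) (m i) = g i"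
      if i: "i \<in> Obj I" for i
    proof -
      have da: "Dom (C i) (a i) = fst A i" and db: "Dom (C i) (b i) = fst B i"
        using GarrD(3)[OF ua i] GarrD(3)[OF vb i] by (auto simp: hom_iff)
      have "\<exists>!h. h \<in> hom (C i) (fst Z i) (fst X i) \<and> Comp (C i) (f1 i) h = f i \<and> Comp (C i) (f2 i) h = g i"
        using category.pb_ex[OF catC[OF i] lv[OF i] Gobj_lv[OF Z i]] GarrD(3)[OF f i] GarrD(3)[OF g i] fg[OF i] da db
        by simp
      from theI'[OF this] show ?thesis unfolding m_def .
    qed
    have M: "(Z, X, lw (Obj I) m) \<in> Arr G"
      by (rule lift_arr[OF Z X f1 f2 f g], rule m, assumption, rule mono, assumption+)
    show ?thesis
    proof (rule ex1I[of _ "(Z, X, lw (Obj I) m)"])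
      have "lw (Obj I) (\<lambda>i. Comp (C i) (f1 i) (lw (Obj I) m i)) = f"
        "lw (Obj I) (\<lambda>i. Comp (C i) (f2 i) (lw (Obj I) m i)) = g"
        using m GarrD(4)[OF f] GarrD(4)[OF g] by (auto intro!: lw_eqI)
      thus "(Z, X, lw (Obj I) m) \<in> hom G Z X \<and> Comp G (X, A, f1) (Z, X, lw (Obj I) m) = F \<and>
          Comp G (X, B, f2) (Z, X, lw (Obj I) m) = H" using M Ff Hg by (simp add: hom_iff)
    next
      fix k assume k: "k \<in> hom G Z X \<and> Comp G (X, A, f1) k = F \<and> Comp G (X, B, f2) k = H"
      then obtain kf where kk: "k = (Z,X,kf)" "(Z,X,kf) \<in> Arr G" using Ghom_triple by blast
      have "kf = lw (Obj I) m" by (rule lift_unique[OF kk(2) f1 f2], use k kk Ff Hg in simp, use k kk Ff Hg in simp, rule m, assumption, rule mono, assumption+)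
      thus "k = (Z, X, lw (Obj I) m)" using kk by simp
    qed
  qed
  moreover have "(X,A,f1) \<in> hom G X A" "(X,B,f2) \<in> hom G X B" using f1 f2 by (simp_all add: hom_iff)
  ultimately show ?thesis unfolding is_pullback_def using X ua vb sq by simp
qed

lemma Pb_pb:
  assumes ua: "(A,D,a) \<in> Arr G" and vb: "(B,D,b) \<in> Arr G"
    and ex: "\<And>i. i \<in> Obj I \<Longrightarrow> \<exists>Q q1 q2. is_pullback (C i) (a i) (b i) Q q1 q2"
  shows "is_pullback G (A,D,a) (B,D,b) (PbO A B a b) (PbO A B a b, A, lw (Obj I) (q1o a b)) (PbO A B a b, B, lw (Obj I) (q2o a b))"
proof (rule R_pb[OF ua vb PbO_in[OF ua vb ex] Pb1_arr[OF ua vb ex] Pb2_arr[OF ua vb ex]])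
  fix i assume i: "i \<in> Obj I"
  have "is_pullback (C i) (a i) (b i) (Qo a b i) (q1o a b i) (q2o a b i)" using pbl_pb[OF ua vb ex i] .
  thus "is_pullback (C i) (a i) (b i) (fst (PbO A B a b) i) (lw (Obj I) (q1o a b) i) (lw (Obj I) (q2o a b) i)"
    using PbO_fst[OF ua vb ex i] i by simp
qed

lemma L_pb:
  assumes P: "is_pullback G (A,D,a) (B,D,b) X p1 p2"
    and ex: "\<And>i. i \<in> Obj I \<Longrightarrow> \<exists>Q q1 q2. is_pullback (C i) (a i) (b i) Q q1 q2"
  shows "\<exists>f1 f2. p1 = (X,A,f1) \<and> p2 = (X,B,f2) \<and> (X,A,f1) \<in> Arr G \<and> (X,B,f2) \<in> Arr G \<and>
     (\<forall>i\<in>Obj I. is_pullback (C i) (a i) (b i) (fst X i) (f1 i) (f2 i))"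
proof -
  have ua: "(A,D,a) \<in> Arr G" and vb: "(B,D,b) \<in> Arr G" and X: "X \<in> Obj G"
    and p1: "p1 \<in> hom G X A" and p2: "p2 \<in> hom G X B" using P by (auto simp: is_pullback_def)
  obtain f1 where f1: "p1 = (X,A,f1)" "(X,A,f1) \<in> Arr G" using Ghom_triple p1 by blast
  obtain f2 where f2: "p2 = (X,B,f2)" "(X,B,f2) \<in> Arr G" using Ghom_triple p2 by blast
  let ?X' = "PbO A B a b" and ?q1 = "(PbO A B a b, A, lw (Obj I) (q1o a b))" and ?q2 = "(PbO A B a b, B, lw (Obj I) (q2o a b))"
  have P': "is_pullback G (A,D,a) (B,D,b) ?X' ?q1 ?q2" using Pb_pb[OF ua vb ex] .
  have q1: "?q1 \<in> hom G ?X' A" and q2: "?q2 \<in> hom G ?X' B" and X': "?X' \<in> Obj G"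
    and sq': "Comp G (A,D,a) ?q1 = Comp G (B,D,b) ?q2" using P' by (auto simp: is_pullback_def)
  have sq: "Comp G (A,D,a) p1 = Comp G (B,D,b) p2" using P by (simp add: is_pullback_def)
  obtain h where h: "h \<in> hom G ?X' X" "Comp G p1 h = ?q1" "Comp G p2 h = ?q2"
    using P X' q1 q2 sq' unfolding is_pullback_def by (metis G_Dom)
  obtain h' where h': "h' \<in> hom G X ?X'" "Comp G ?q1 h' = p1" "Comp G ?q2 h' = p2"
    using P' X p1 p2 sq unfolding is_pullback_def by (metis G_Dom)
  have hh: "Comp G h h' = Idm G X"
  proof (rule G.pb_unique[OF P G.comp_hom[OF h'(1) h(1)] G.id_hom[OF X]])
    show "Comp G p1 (Comp G h h') = Comp G p1 (Idm G X)"
      using G.assoc[OF h'(1) h(1) p1] h h' G.id_right[OF p1] by simp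
    show "Comp G p2 (Comp G h h') = Comp G p2 (Idm G X)"
      using G.assoc[OF h'(1) h(1) p2] h h' G.id_right[OF p2] by simp
  qed
  obtain hf where hf: "h = (?X', X, hf)" "(?X', X, hf) \<in> Arr G" using Ghom_triple h(1) by blast
  obtain hf' where hf': "h' = (X, ?X', hf')" "(X, ?X', hf') \<in> Arr G" using Ghom_triple h'(1) by blast
  have "is_pullback (C i) (a i) (b i) (fst X i) (f1 i) (f2 i)" if i: "i \<in> Obj I" for i
  proof (rule category.pb_transport[OF catC[OF i] pbl_pb[OF ua vb ex i] Gobj_lv[OF X i]])
    have da: "Dom (C i) (a i) = fst A i" and db: "Dom (C i) (b i) = fst B i"
      using GarrD(3)[OF ua i] GarrD(3)[OF vb i] by (auto simp: hom_iff)
    show "f1 i \<in> hom (C i) (fst X i) (Dom (C i) (a i))" "f2 i \<in> hom (C i) (fst X i) (Dom (C i) (b i))"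
      using GarrD(3)[OF f1(2) i] GarrD(3)[OF f2(2) i] da db by auto
    show "hf i \<in> hom (C i) (Qo a b i) (fst X i)" using GarrD(3)[OF hf(2) i] PbO_fst[OF ua vb ex i] by simp
    show "hf' i \<in> hom (C i) (fst X i) (Qo a b i)" using GarrD(3)[OF hf'(2) i] PbO_fst[OF ua vb ex i] by simp
    show "Comp (C i) (hf i) (hf' i) = Idm (C i) (fst X i)" using hh hf hf' i by (auto simp: G_Idm dest: lw_fun)
    show "Comp (C i) (f1 i) (hf i) = q1o a b i" using h(2) f1 hf i by (auto dest: lw_fun)
    show "Comp (C i) (f2 i) (hf i) = q2o a b i" using h(3) f2 hf i by (auto dest: lw_fun)
    show "Comp (C i) (q1o a b i) (hf' i) = f1 i" using h'(2) f1 hf' i by (auto dest: lw_fun)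
    show "Comp (C i) (q2o a b i) (hf' i) = f2 i" using h'(3) f2 hf' i by (auto dest: lw_fun)
  qed
  thus ?thesis using f1 f2 by blast
qed

end



lemma PcatD:
  assumes "is_Pcat C S"
  shows "has_finite_products C"
  "nat_trans C id id (PO S) (PM S) (iota S)"
  "nat_trans C (PO S) (PM S) id id (dl0 S)"
  "nat_trans C (PO S) (PM S) id id (dl1 S)"
  "nat_trans C (PO S) (PM S) (PO S) (PM S) (tau S)"
  "nat_trans C (PO S) (PM S) (\<lambda>A. PO S (PO S A)) (\<lambda>f. PM S (PM S f)) (cc S)"
  "nat_trans C (\<lambda>A. PO S (PO S A)) (\<lambda>f. PM S (PM S f)) (\<lambda>A. PO S (PO S A)) (\<lambda>f. PM S (PM S f)) (mu S)"
  "nat_trans C (\<lambda>A. PO S (PO S A)) (\<lambda>f. PM S (PM S f)) (PO S) (PM S) (nabla S)"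
  using assms unfolding is_Pcat_def Let_def by blast+

lemma PcD6:
  assumes "is_Pcat C S"
  shows "(\<forall>A\<in>Obj C. Comp C (dl0 S A) (iota S A) = Idm C A \<and> Comp C (dl1 S A) (iota S A) = Idm C A)"
  using assms unfolding is_Pcat_def Let_def by (elim conjE) assumption

lemma PcD8:
  assumes "is_Pcat C S"
  shows "(\<forall>A\<in>Obj C. Comp C (tau S A) (tau S A) = Idm C (PO S A) \<and> Comp C (tau S A) (iota S A) = iota S A \<and>
        Comp C (dl0 S A) (tau S A) = dl1 S A \<and> Comp C (dl1 S A) (tau S A) = dl0 S A)"
  using assms unfolding is_Pcat_def Let_def by (elim conjE) assumption

lemma PcD10:
  assumes "is_Pcat C S"
  shows "(\<forall>A\<in>Obj C.
        Comp C (cc S (PO S A)) (cc S A) = Comp C (PM S (cc S A)) (cc S A) \<and>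
        Comp C (dl1 S (PO S A)) (cc S A) = Idm C (PO S A) \<and> Comp C (PM S (dl1 S A)) (cc S A) = Idm C (PO S A) \<and>
        Comp C (cc S A) (iota S A) = Comp C (iota S (PO S A)) (iota S A) \<and>
        Comp C (dl0 S (PO S A)) (cc S A) = Comp C (iota S A) (dl0 S A) \<and>
        Comp C (PM S (dl0 S A)) (cc S A) = Comp C (iota S A) (dl0 S A))"
  using assms unfolding is_Pcat_def Let_def by (elim conjE) assumption

lemma PcD12:
  assumes "is_Pcat C S"
  shows "(\<forall>A\<in>Obj C. is_iso C (mu S A) \<and>
        Comp C (dl0 S (PO S A)) (mu S A) = PM S (dl0 S A) \<and> Comp C (dl1 S (PO S A)) (mu S A) = PM S (dl1 S A) \<and>
        Comp C (PM S (dl0 S A)) (mu S A) = dl0 S (PO S A) \<and> Comp C (PM S (dl1 S A)) (mu S A) = dl1 S (PO S A))"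
  using assms unfolding is_Pcat_def Let_def by (elim conjE) assumption

lemma PcD14:
  assumes "is_Pcat C S"
  shows "(\<forall>A\<in>Obj C.
        Comp C (dl0 S A) (nabla S A) = Comp C (dl0 S A) (dl0 S (PO S A)) \<and>
        Comp C (dl1 S A) (nabla S A) = Comp C (dl1 S A) (dl1 S (PO S A)) \<and>
        Comp C (nabla S A) (iota S (PO S A)) = Idm C (PO S A))"
  using assms unfolding is_Pcat_def Let_def by (elim conjE) assumption

lemma PcD15:
  assumes "is_Pcat C S"
  shows "Fib S \<subseteq> Arr C"
  using assms unfolding is_Pcat_def Let_def by (elim conjE) assumption

lemma PcD16:
  assumes "is_Pcat C S"
  shows "WE S \<subseteq> Arr C"
  using assms unfolding is_Pcat_def Let_def by (elim conjE) assumption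

lemma PcD17:
  assumes "is_Pcat C S"
  shows "(\<forall>f. is_iso C f \<longrightarrow> f \<in> Fib S \<and> f \<in> WE S)"
  using assms unfolding is_Pcat_def Let_def by (elim conjE) assumption

lemma PcD18:
  assumes "is_Pcat C S"
  shows "(\<forall>f g. f \<in> Fib S \<and> g \<in> Fib S \<and> Cod C f = Dom C g \<longrightarrow> Comp C g f \<in> Fib S)"
  using assms unfolding is_Pcat_def Let_def by (elim conjE) assumption

lemma PcD19:
  assumes "is_Pcat C S"
  shows "(\<forall>f g. f \<in> WE S \<and> g \<in> WE S \<and> Cod C f = Dom C g \<longrightarrow> Comp C g f \<in> WE S)"
  using assms unfolding is_Pcat_def Let_def by (elim conjE) assumption

lemma PcD20:
  assumes "is_Pcat C S"
  shows "(\<forall>f g. f \<in> Arr C \<and> g \<in> Arr C \<and> Cod C f = Dom C g \<longrightarrow>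
        (f \<in> WE S \<and> Comp C g f \<in> WE S \<longrightarrow> g \<in> WE S) \<and>
        (g \<in> WE S \<and> Comp C g f \<in> WE S \<longrightarrow> f \<in> WE S))"
  using assms unfolding is_Pcat_def Let_def by (elim conjE) assumption

lemma PcD21:
  assumes "is_Pcat C S"
  shows "(\<forall>e. is_terminal C e \<longrightarrow> (\<forall>A\<in>Obj C. \<forall>t\<in>hom C A e. t \<in> Fib S))"
  using assms unfolding is_Pcat_def Let_def by (elim conjE) assumption

lemma PcD22:
  assumes "is_Pcat C S"
  shows "(\<forall>A\<in>Obj C. iota S A \<in> WE S \<and>
        dl0 S A \<in> Fib S \<and> dl0 S A \<in> WE S \<and> dl1 S A \<in> Fib S \<and> dl1 S A \<in> WE S \<and>
        (\<forall>X p1 p2. is_product C A A X p1 p2 \<longrightarrow>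
           (\<forall>h\<in>hom C (PO S A) X. Comp C p1 h = dl0 S A \<and> Comp C p2 h = dl1 S A \<longrightarrow> h \<in> Fib S)))"
  using assms unfolding is_Pcat_def Let_def by (elim conjE) assumption

lemma PcD23:
  assumes "is_Pcat C S"
  shows "(\<forall>u v. u \<in> Arr C \<and> v \<in> Fib S \<and> Cod C u = Cod C v \<longrightarrow>
        (\<exists>Q q1 q2. is_pullback C u v Q q1 q2) \<and>
        (\<forall>Q q1 q2. is_pullback C u v Q q1 q2 \<longrightarrow>
           q1 \<in> Fib S \<and> (v \<in> WE S \<longrightarrow> q1 \<in> WE S) \<and> (u \<in> WE S \<longrightarrow> q2 \<in> WE S)))"
  using assms unfolding is_Pcat_def Let_def by (elim conjE) assumption

lemma PcD24:
  assumes "is_Pcat C S"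
  shows "(\<forall>f\<in>Fib S. PM S f \<in> Fib S)"
  using assms unfolding is_Pcat_def Let_def by (elim conjE) assumption

lemma PcD25:
  assumes "is_Pcat C S"
  shows "(\<forall>f\<in>WE S. PM S f \<in> WE S)"
  using assms unfolding is_Pcat_def Let_def by (elim conjE) assumption

lemma PcD26:
  assumes "is_Pcat C S"
  shows "(\<forall>u v Q q1 q2. v \<in> Fib S \<and> is_pullback C u v Q q1 q2 \<longrightarrow>
        is_pullback C (PM S u) (PM S v) (PO S Q) (PM S q1) (PM S q2))"
  using assms unfolding is_Pcat_def Let_def by (elim conjE) assumption

lemma PcD27:
  assumes "is_Pcat C S"
  shows "(\<forall>v\<in>Fib S. \<forall>AA a1 a2 BB b1 b2 w h Q q1 q2 k.
        is_product C (Dom C v) (Dom C v) AA a1 a2 \<and>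
        is_product C (Cod C v) (Cod C v) BB b1 b2 \<and>
        w \<in> hom C AA BB \<and> Comp C b1 w = Comp C v a1 \<and> Comp C b2 w = Comp C v a2 \<and>
        h \<in> hom C (PO S (Cod C v)) BB \<and> Comp C b1 h = dl0 S (Cod C v) \<and> Comp C b2 h = dl1 S (Cod C v) \<and>
        is_pullback C w h Q q1 q2 \<and>
        k \<in> hom C (PO S (Dom C v)) Q \<and>
        Comp C a1 (Comp C q1 k) = dl0 S (Dom C v) \<and> Comp C a2 (Comp C q1 k) = dl1 S (Dom C v) \<and>
        Comp C q2 k = PM S v
        \<longrightarrow> k \<in> Fib S)"
  using assms unfolding is_Pcat_def Let_def by (elim conjE) assumption

lemma PcatE:
  assumes P: "is_Pcat C S" and A: "A \<in> Obj C"
  shows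
  "Comp C (dl0 S A) (iota S A) = Idm C A"
  "Comp C (dl1 S A) (iota S A) = Idm C A"
  "Comp C (tau S A) (tau S A) = Idm C (PO S A)"
  "Comp C (tau S A) (iota S A) = iota S A"
  "Comp C (dl0 S A) (tau S A) = dl1 S A"
  "Comp C (dl1 S A) (tau S A) = dl0 S A"
  "Comp C (cc S (PO S A)) (cc S A) = Comp C (PM S (cc S A)) (cc S A)"
  "Comp C (dl1 S (PO S A)) (cc S A) = Idm C (PO S A)"
  "Comp C (PM S (dl1 S A)) (cc S A) = Idm C (PO S A)"
  "Comp C (cc S A) (iota S A) = Comp C (iota S (PO S A)) (iota S A)"
  "Comp C (dl0 S (PO S A)) (cc S A) = Comp C (iota S A) (dl0 S A)"
  "Comp C (PM S (dl0 S A)) (cc S A) = Comp C (iota S A) (dl0 S A)"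
  "is_iso C (mu S A)"
  "Comp C (dl0 S (PO S A)) (mu S A) = PM S (dl0 S A)"
  "Comp C (dl1 S (PO S A)) (mu S A) = PM S (dl1 S A)"
  "Comp C (PM S (dl0 S A)) (mu S A) = dl0 S (PO S A)"
  "Comp C (PM S (dl1 S A)) (mu S A) = dl1 S (PO S A)"
  "Comp C (dl0 S A) (nabla S A) = Comp C (dl0 S A) (dl0 S (PO S A))"
  "Comp C (dl1 S A) (nabla S A) = Comp C (dl1 S A) (dl1 S (PO S A))"
  "Comp C (nabla S A) (iota S (PO S A)) = Idm C (PO S A)"
  "iota S A \<in> WE S" "dl0 S A \<in> Fib S" "dl0 S A \<in> WE S" "dl1 S A \<in> Fib S" "dl1 S A \<in> WE S"
  using PcD6[OF P] PcD8[OF P] PcD10[OF P] PcD12[OF P] PcD14[OF P] PcD22[OF P] A by auto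

context fixes C S assumes P: "is_Pcat C S" begin
lemma Pc_FibArr: "f \<in> Fib S \<Longrightarrow> f \<in> Arr C" using PcD15[OF P] by blast
lemma Pc_WEArr: "f \<in> WE S \<Longrightarrow> f \<in> Arr C" using PcD16[OF P] by blast
lemma Pc_iso: "is_iso C f \<Longrightarrow> f \<in> Fib S \<and> f \<in> WE S" using PcD17[OF P] by blast
lemma Pc_compF: "f \<in> Fib S \<Longrightarrow> g \<in> Fib S \<Longrightarrow> Cod C f = Dom C g \<Longrightarrow> Comp C g f \<in> Fib S"
  using PcD18[OF P] by blast
lemma Pc_compW: "f \<in> WE S \<Longrightarrow> g \<in> WE S \<Longrightarrow> Cod C f = Dom C g \<Longrightarrow> Comp C g f \<in> WE S"
  using PcD19[OF P] by blast
lemma Pc_23a: "f \<in> Arr C \<Longrightarrow> g \<in> Arr C \<Longrightarrow> Cod C f = Dom C g \<Longrightarrow> f \<in> WE S \<Longrightarrow> Comp C g f \<in> WE S \<Longrightarrow> g \<in> WE S"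
  using PcD20[OF P] by blast
lemma Pc_23b: "f \<in> Arr C \<Longrightarrow> g \<in> Arr C \<Longrightarrow> Cod C f = Dom C g \<Longrightarrow> g \<in> WE S \<Longrightarrow> Comp C g f \<in> WE S \<Longrightarrow> f \<in> WE S"
  using PcD20[OF P] by blast
lemma Pc_term: "is_terminal C e \<Longrightarrow> A \<in> Obj C \<Longrightarrow> t \<in> hom C A e \<Longrightarrow> t \<in> Fib S"
  using PcD21[OF P] by blast
lemma Pc_P2prod: "A \<in> Obj C \<Longrightarrow> is_product C A A X p1 p2 \<Longrightarrow> h \<in> hom C (PO S A) X \<Longrightarrow>
      Comp C p1 h = dl0 S A \<Longrightarrow> Comp C p2 h = dl1 S A \<Longrightarrow> h \<in> Fib S"
  using PcD22[OF P] by blast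
lemma Pc_P3ex: "u \<in> Arr C \<Longrightarrow> v \<in> Fib S \<Longrightarrow> Cod C u = Cod C v \<Longrightarrow> \<exists>Q q1 q2. is_pullback C u v Q q1 q2"
  using PcD23[OF P] by blast
lemma Pc_P3: "u \<in> Arr C \<Longrightarrow> v \<in> Fib S \<Longrightarrow> Cod C u = Cod C v \<Longrightarrow> is_pullback C u v Q q1 q2 \<Longrightarrow>
      q1 \<in> Fib S \<and> (v \<in> WE S \<longrightarrow> q1 \<in> WE S) \<and> (u \<in> WE S \<longrightarrow> q2 \<in> WE S)"
  using PcD23[OF P] by blast
lemma Pc_P4F: "f \<in> Fib S \<Longrightarrow> PM S f \<in> Fib S" using PcD24[OF P] by blast
lemma Pc_P4W: "f \<in> WE S \<Longrightarrow> PM S f \<in> WE S" using PcD25[OF P] by blast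
lemma Pc_P4pb: "v \<in> Fib S \<Longrightarrow> is_pullback C u v Q q1 q2 \<Longrightarrow>
        is_pullback C (PM S u) (PM S v) (PO S Q) (PM S q1) (PM S q2)"
  using PcD26[OF P] by blast
lemma Pc_P5: "v \<in> Fib S \<Longrightarrow>
        is_product C (Dom C v) (Dom C v) AA a1 a2 \<Longrightarrow>
        is_product C (Cod C v) (Cod C v) BB b1 b2 \<Longrightarrow>
        w \<in> hom C AA BB \<Longrightarrow> Comp C b1 w = Comp C v a1 \<Longrightarrow> Comp C b2 w = Comp C v a2 \<Longrightarrow>
        h \<in> hom C (PO S (Cod C v)) BB \<Longrightarrow> Comp C b1 h = dl0 S (Cod C v) \<Longrightarrow> Comp C b2 h = dl1 S (Cod C v) \<Longrightarrow>
        is_pullback C w h Q q1 q2 \<Longrightarrow>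
        k \<in> hom C (PO S (Dom C v)) Q \<Longrightarrow>
        Comp C a1 (Comp C q1 k) = dl0 S (Dom C v) \<Longrightarrow> Comp C a2 (Comp C q1 k) = dl1 S (Dom C v) \<Longrightarrow>
        Comp C q2 k = PM S v \<Longrightarrow> k \<in> Fib S"
  using PcD27[OF P] by blast
end


context GS begin

lemma PO_obj[simp]: "i \<in> Obj I \<Longrightarrow> A \<in> Obj (C i) \<Longrightarrow> PO (S i) A \<in> Obj (C i)"
  using fun_obj[OF Pfun] by blast

lemma G_iso_D:
  assumes F: "is_iso G F" and i: "i \<in> Obj I"
  shows "is_iso (C i) (snd (snd F) i)"
proof -
  obtain X Y f where Fe: "F = (X,Y,f)" by (cases F)
  have fa: "(X,Y,f) \<in> Arr G" using F Fe by (simp add: is_iso_def)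
  obtain g where g: "g \<in> hom G Y X" "Comp G g F = Idm G X" "Comp G F g = Idm G Y"
    using F Fe unfolding is_iso_def by auto
  obtain gf where gf: "g = (Y,X,gf)" "(Y,X,gf) \<in> Arr G" using Ghom_triple g(1) by blast
  have fi: "f i \<in> hom (C i) (fst X i) (fst Y i)" and gi: "gf i \<in> hom (C i) (fst Y i) (fst X i)"
    using GarrD(3)[OF fa i] GarrD(3)[OF gf(2) i] by auto
  have "Comp (C i) (gf i) (f i) = Idm (C i) (fst X i)" using g(2) gf Fe i by (auto simp: G_Idm dest: lw_fun)
  moreover have "Comp (C i) (f i) (gf i) = Idm (C i) (fst Y i)" using g(3) gf Fe i by (auto simp: G_Idm dest: lw_fun)
  ultimately show ?thesis using fi gi Fe unfolding is_iso_def by (auto simp: hom_iff)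
qed

lemma G_iso_lv:
  assumes fa: "(X,Y,f) \<in> Arr G" and lv: "\<And>i. i \<in> Obj I \<Longrightarrow> is_iso (C i) (f i)"
  shows "is_iso G (X,Y,f)"
proof -
  have X: "X \<in> Obj G" and Y: "Y \<in> Obj G" using GarrD fa by auto
  define inv where "inv i = (SOME g. g \<in> hom (C i) (fst Y i) (fst X i) \<and> Comp (C i) g (f i) = Idm (C i) (fst X i) \<and>
      Comp (C i) (f i) g = Idm (C i) (fst Y i))" for i
  have inv: "inv i \<in> hom (C i) (fst Y i) (fst X i) \<and> Comp (C i) (inv i) (f i) = Idm (C i) (fst X i) \<and>
      Comp (C i) (f i) (inv i) = Idm (C i) (fst Y i)" if i: "i \<in> Obj I" for i
  proof -
    have "f i \<in> hom (C i) (fst X i) (fst Y i)" using GarrD(3)[OF fa i] .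
    hence "\<exists>g. g \<in> hom (C i) (fst Y i) (fst X i) \<and> Comp (C i) g (f i) = Idm (C i) (fst X i) \<and>
      Comp (C i) (f i) g = Idm (C i) (fst Y i)" using lv[OF i] unfolding is_iso_def by (auto simp: hom_iff)
    from someI_ex[OF this] show ?thesis unfolding inv_def .
  qed
  have ga: "(Y, X, lw (Obj I) inv) \<in> Arr G"
  proof (rule GarrI[OF Y X])
    fix i assume "i \<in> Obj I" thus "lw (Obj I) inv i \<in> hom (C i) (fst Y i) (fst X i)" using inv by simp
  next
    fix w assume w: "w \<in> Arr I"
    let ?i = "Dom I w" and ?j = "Cod I w"
    have i: "?i \<in> Obj I" and j: "?j \<in> Obj I" using w dI cI by auto
    interpret Cj: category "C ?j" using catC j .
    have pX: "snd X w \<in> hom (C ?j) (Fo w (fst X ?i)) (fst X ?j)" using Gobj_phi X w by blast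
    have pY: "snd Y w \<in> hom (C ?j) (Fo w (fst Y ?i)) (fst Y ?j)" using Gobj_phi Y w by blast
    have fi: "f ?i \<in> hom (C ?i) (fst X ?i) (fst Y ?i)" and fj: "f ?j \<in> hom (C ?j) (fst X ?j) (fst Y ?j)"
      using GarrD(3)[OF fa] i j by auto
    have ii: "inv ?i \<in> hom (C ?i) (fst Y ?i) (fst X ?i)" and ij: "inv ?j \<in> hom (C ?j) (fst Y ?j) (fst X ?j)"
      using inv i j by auto
    have Fi: "Fm w (inv ?i) \<in> hom (C ?j) (Fo w (fst Y ?i)) (Fo w (fst X ?i))" using Fm_hom w ii by blast
    have Ff: "Fm w (f ?i) \<in> hom (C ?j) (Fo w (fst X ?i)) (Fo w (fst Y ?i))" using Fm_hom w fi by blast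
    have Yi: "fst Y ?i \<in> Obj (C ?i)" using Gobj_lv Y i by blast
    have a1: "Comp (C ?j) (snd X w) (Fm w (inv ?i)) \<in> hom (C ?j) (Fo w (fst Y ?i)) (fst X ?j)"
      using Cj.comp_hom[OF Fi pX] .
    have "Comp (C ?j) (snd X w) (Fm w (inv ?i)) = Comp (C ?j) (Idm (C ?j) (fst X ?j)) (Comp (C ?j) (snd X w) (Fm w (inv ?i)))"
      using Cj.id_left[OF a1] by simp
    also have "\<dots> = Comp (C ?j) (Comp (C ?j) (inv ?j) (f ?j)) (Comp (C ?j) (snd X w) (Fm w (inv ?i)))" using inv j by simp
    also have "\<dots> = Comp (C ?j) (inv ?j) (Comp (C ?j) (f ?j) (Comp (C ?j) (snd X w) (Fm w (inv ?i))))"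
      using Cj.assoc[OF a1 fj ij] by simp
    also have "Comp (C ?j) (f ?j) (Comp (C ?j) (snd X w) (Fm w (inv ?i))) = Comp (C ?j) (Comp (C ?j) (f ?j) (snd X w)) (Fm w (inv ?i))"
      using Cj.assoc[OF Fi pX fj] .
    also have "\<dots> = Comp (C ?j) (Comp (C ?j) (snd Y w) (Fm w (f ?i))) (Fm w (inv ?i))" using GarrD(5)[OF fa w] by simp
    also have "\<dots> = Comp (C ?j) (snd Y w) (Comp (C ?j) (Fm w (f ?i)) (Fm w (inv ?i)))" using Cj.assoc[OF Fi Ff pY] by simp
    also have "\<dots> = Comp (C ?j) (snd Y w) (Fm w (Comp (C ?i) (f ?i) (inv ?i)))" using Fm_comp[OF w ii fi] by simp
    also have "\<dots> = Comp (C ?j) (snd Y w) (Idm (C ?j) (Fo w (fst Y ?i)))" using inv i Fm_id[OF w Yi] by simp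
    also have "\<dots> = snd Y w" using Cj.id_right[OF pY] .
    finally show "Comp (C ?j) (lw (Obj I) inv ?j) (snd Y w) = Comp (C ?j) (snd X w) (Fm w (lw (Obj I) inv ?i))"
      using i j by simp
  qed simp
  have e1: "Comp G (Y, X, lw (Obj I) inv) (X,Y,f) = Idm G X"
    using inv by (auto simp: G_Idm intro!: lw_cong2)
  have e2: "Comp G (X,Y,f) (Y, X, lw (Obj I) inv) = Idm G Y"
    using inv by (auto simp: G_Idm intro!: lw_cong2)
  have "(Y, X, lw (Obj I) inv) \<in> hom G Y X" using ga by (simp add: hom_iff)
  thus ?thesis unfolding is_iso_def G_Dom G_Cod using fa e1 e2 by blast
qed


lemma PcG0: "is_category G"
  using G_cat .

lemma PcG1: "has_finite_products G"
  unfolding has_finite_products_def using Eobj_term Pr_prod by blast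

lemma PcG2: "is_functor G G (PO GP) (PM GP)"
  unfolding GP_simps(1) by (rule lwfun_functor[OF lwfun_P])

lemma PcG3: "nat_trans G id id (PO GP) (PM GP) (iota GP)"
  unfolding GP_simps(1)
  apply (rule lwfun_nat[OF lwfun_id lwfun_P, where \<sigma>="\<lambda>i. iota (S i)"])
  using PcatD(2)[OF Pc] apply simp
  using pp_maps(1) apply simp
  by (simp add: GP_simps)

lemma PcG4: "nat_trans G (PO GP) (PM GP) id id (dl0 GP)"
  unfolding GP_simps(1)
  apply (rule lwfun_nat[OF lwfun_P lwfun_id, where \<sigma>="\<lambda>i. dl0 (S i)"])
  using PcatD(3)[OF Pc] apply simp
  using pp_maps(2) apply simp
  by (simp add: GP_simps)

lemma PcG5: "nat_trans G (PO GP) (PM GP) id id (dl1 GP)"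
  unfolding GP_simps(1)
  apply (rule lwfun_nat[OF lwfun_P lwfun_id, where \<sigma>="\<lambda>i. dl1 (S i)"])
  using PcatD(4)[OF Pc] apply simp
  using pp_maps(3) apply simp
  by (simp add: GP_simps)

lemma PcG7: "nat_trans G (PO GP) (PM GP) (PO GP) (PM GP) (tau GP)"
  unfolding GP_simps(1)
  apply (rule lwfun_nat[OF lwfun_P lwfun_P, where \<sigma>="\<lambda>i. tau (S i)"])
  using PcatD(5)[OF Pc] apply simp
  using pp_maps(4) apply simp
  by (simp add: GP_simps)

lemma PcG9: "nat_trans G (PO GP) (PM GP) (\<lambda>A. PO GP (PO GP A)) (\<lambda>f. PM GP (PM GP f)) (cc GP)"
  unfolding GP_simps(1)
  apply (rule lwfun_nat[OF lwfun_P lwfun_P2, where \<sigma>="\<lambda>i. cc (S i)"])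
  using PcatD(6)[OF Pc] apply simp
  using pp_maps(5) apply simp
  by (simp add: GP_simps)

lemma PcG11: "nat_trans G (\<lambda>A. PO GP (PO GP A)) (\<lambda>f. PM GP (PM GP f)) (\<lambda>A. PO GP (PO GP A)) (\<lambda>f. PM GP (PM GP f)) (mu GP)"
  unfolding GP_simps(1)
  apply (rule lwfun_nat[OF lwfun_P2 lwfun_P2, where \<sigma>="\<lambda>i. mu (S i)"])
  using PcatD(7)[OF Pc] apply simp
  using pp_maps(6) apply simp
  by (simp add: GP_simps)

lemma PcG13: "nat_trans G (\<lambda>A. PO GP (PO GP A)) (\<lambda>f. PM GP (PM GP f)) (PO GP) (PM GP) (nabla GP)"
  unfolding GP_simps(1)
  apply (rule lwfun_nat[OF lwfun_P2 lwfun_P, where \<sigma>="\<lambda>i. nabla (S i)"])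
  using PcatD(8)[OF Pc] apply simp
  using pp_maps(7) apply simp
  by (simp add: GP_simps)

lemma PcG6: "(\<forall>A\<in>Obj G. Comp G (dl0 GP A) (iota GP A) = Idm G A \<and> Comp G (dl1 GP A) (iota GP A) = Idm G A)"
  by (simp add: GP_simps G_Idm PcatE(1,2)[OF Pc] Gobj_lv)

lemma PcG8: "(\<forall>A\<in>Obj G. Comp G (tau GP A) (tau GP A) = Idm G (PO GP A) \<and> Comp G (tau GP A) (iota GP A) = iota GP A \<and>
        Comp G (dl0 GP A) (tau GP A) = dl1 GP A \<and> Comp G (dl1 GP A) (tau GP A) = dl0 GP A)"
  by (simp add: GP_simps G_Idm PcatE(3-6)[OF Pc] Gobj_lv)

lemma PcG10: "(\<forall>A\<in>Obj G.
        Comp G (cc GP (PO GP A)) (cc GP A) = Comp G (PM GP (cc GP A)) (cc GP A) \<and>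
        Comp G (dl1 GP (PO GP A)) (cc GP A) = Idm G (PO GP A) \<and> Comp G (PM GP (dl1 GP A)) (cc GP A) = Idm G (PO GP A) \<and>
        Comp G (cc GP A) (iota GP A) = Comp G (iota GP (PO GP A)) (iota GP A) \<and>
        Comp G (dl0 GP (PO GP A)) (cc GP A) = Comp G (iota GP A) (dl0 GP A) \<and>
        Comp G (PM GP (dl0 GP A)) (cc GP A) = Comp G (iota GP A) (dl0 GP A))"
  by (simp add: GP_simps G_Idm PcatE(7-12)[OF Pc] Gobj_lv)

lemma PcG14: "(\<forall>A\<in>Obj G.
        Comp G (dl0 GP A) (nabla GP A) = Comp G (dl0 GP A) (dl0 GP (PO GP A)) \<and>
        Comp G (dl1 GP A) (nabla GP A) = Comp G (dl1 GP A) (dl1 GP (PO GP A)) \<and>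
        Comp G (nabla GP A) (iota GP (PO GP A)) = Idm G (PO GP A))"
  by (simp add: GP_simps G_Idm PcatE(18-20)[OF Pc] Gobj_lv)

lemma PcG12: "(\<forall>A\<in>Obj G. is_iso G (mu GP A) \<and>
        Comp G (dl0 GP (PO GP A)) (mu GP A) = PM GP (dl0 GP A) \<and> Comp G (dl1 GP (PO GP A)) (mu GP A) = PM GP (dl1 GP A) \<and>
        Comp G (PM GP (dl0 GP A)) (mu GP A) = dl0 GP (PO GP A) \<and> Comp G (PM GP (dl1 GP A)) (mu GP A) = dl1 GP (PO GP A))"
proof (intro ballI conjI)
  fix A assume A: "A \<in> Obj G"
  have "mu GP A \<in> hom G (PO GP (PO GP A)) (PO GP (PO GP A))" using nat_hom[OF PcG11 A] by simp
  hence ma: "(gP (gP A), gP (gP A), lw (Obj I) (\<lambda>i. mu (S i) (fst A i))) \<in> Arr G" by (simp add: GP_simps hom_iff)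
  show "is_iso G (mu GP A)" unfolding GP_simps(8)
    by (rule G_iso_lv[OF ma]) (simp add: PcatE(13)[OF Pc] Gobj_lv A)
qed (use PcatE(14-17)[OF Pc] Gobj_lv in \<open>simp_all add: GP_simps\<close>)


lemma PcG15: "Fib GP \<subseteq> Arr G"
  by (auto simp: GP_simps)

lemma PcG16: "WE GP \<subseteq> Arr G"
  by (auto simp: GP_simps)

lemma PcG17: "(\<forall>f. is_iso G f \<longrightarrow> f \<in> Fib GP \<and> f \<in> WE GP)"
proof (intro allI impI)
  fix f assume f: "is_iso G f"
  hence fa: "f \<in> Arr G" by (simp add: is_iso_def)
  have "\<forall>i\<in>Obj I. snd (snd f) i \<in> Fib (S i) \<and> snd (snd f) i \<in> WE (S i)"
    using G_iso_D[OF f] Pc_iso[OF Pc] by blast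
  thus "f \<in> Fib GP \<and> f \<in> WE GP" using fa by (simp add: GP_simps)
qed

lemma PcG18: "(\<forall>f g. f \<in> Fib GP \<and> g \<in> Fib GP \<and> Cod G f = Dom G g \<longrightarrow> Comp G g f \<in> Fib GP)"
proof (intro allI impI)
  fix f g assume H: "f \<in> Fib GP \<and> g \<in> Fib GP \<and> Cod G f = Dom G g"
  obtain X Y a where fe: "f = (X,Y,a)" by (cases f)
  obtain Y2 Z b where ge: "g = (Y2,Z,b)" by (cases g)
  have Y2: "Y2 = Y" using H fe ge by simp
  have fa: "(X,Y,a) \<in> Arr G" and gb: "(Y,Z,b) \<in> Arr G" using H fe ge Y2 by (auto simp: GP_simps)
  have c: "(X, Z, lw (Obj I) (\<lambda>i. Comp (C i) (b i) (a i))) \<in> Arr G" using G_comp_arr[OF fa gb] .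
  have "Comp (C i) (b i) (a i) \<in> Fib (S i)" if i: "i \<in> Obj I" for i
  proof (rule Pc_compF[OF Pc[OF i]])
    show "a i \<in> Fib (S i)" "b i \<in> Fib (S i)" using H fe ge Y2 i by (auto simp: GP_simps)
    show "Cod (C i) (a i) = Dom (C i) (b i)" using GarrD(3)[OF fa i] GarrD(3)[OF gb i] by (simp add: hom_iff)
  qed
  thus "Comp G g f \<in> Fib GP" using c fe ge Y2 by (simp add: GP_simps)
qed

lemma PcG19: "(\<forall>f g. f \<in> WE GP \<and> g \<in> WE GP \<and> Cod G f = Dom G g \<longrightarrow> Comp G g f \<in> WE GP)"
proof (intro allI impI)
  fix f g assume H: "f \<in> WE GP \<and> g \<in> WE GP \<and> Cod G f = Dom G g"
  obtain X Y a where fe: "f = (X,Y,a)" by (cases f)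
  obtain Y2 Z b where ge: "g = (Y2,Z,b)" by (cases g)
  have Y2: "Y2 = Y" using H fe ge by simp
  have fa: "(X,Y,a) \<in> Arr G" and gb: "(Y,Z,b) \<in> Arr G" using H fe ge Y2 by (auto simp: GP_simps)
  have c: "(X, Z, lw (Obj I) (\<lambda>i. Comp (C i) (b i) (a i))) \<in> Arr G" using G_comp_arr[OF fa gb] .
  have "Comp (C i) (b i) (a i) \<in> WE (S i)" if i: "i \<in> Obj I" for i
  proof (rule Pc_compW[OF Pc[OF i]])
    show "a i \<in> WE (S i)" "b i \<in> WE (S i)" using H fe ge Y2 i by (auto simp: GP_simps)
    show "Cod (C i) (a i) = Dom (C i) (b i)" using GarrD(3)[OF fa i] GarrD(3)[OF gb i] by (simp add: hom_iff)
  qed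
  thus "Comp G g f \<in> WE GP" using c fe ge Y2 by (simp add: GP_simps)
qed

lemma PcG20: "(\<forall>f g. f \<in> Arr G \<and> g \<in> Arr G \<and> Cod G f = Dom G g \<longrightarrow>
        (f \<in> WE GP \<and> Comp G g f \<in> WE GP \<longrightarrow> g \<in> WE GP) \<and>
        (g \<in> WE GP \<and> Comp G g f \<in> WE GP \<longrightarrow> f \<in> WE GP))"
proof (intro allI impI)
  fix f g assume H: "f \<in> Arr G \<and> g \<in> Arr G \<and> Cod G f = Dom G g"
  obtain X Y a where fe: "f = (X,Y,a)" by (cases f)
  obtain Y2 Z b where ge: "g = (Y2,Z,b)" by (cases g)
  have Y2: "Y2 = Y" using H fe ge by simp
  have fa: "(X,Y,a) \<in> Arr G" and gb: "(Y,Z,b) \<in> Arr G" using H fe ge Y2 by auto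
  have lv: "a i \<in> Arr (C i)" "b i \<in> Arr (C i)" "Cod (C i) (a i) = Dom (C i) (b i)" if i: "i \<in> Obj I" for i
    using GarrD(3)[OF fa i] GarrD(3)[OF gb i] by (auto simp: hom_iff)
  show "(f \<in> WE GP \<and> Comp G g f \<in> WE GP \<longrightarrow> g \<in> WE GP) \<and>
    (g \<in> WE GP \<and> Comp G g f \<in> WE GP \<longrightarrow> f \<in> WE GP)"
  proof (intro conjI)
  show "f \<in> WE GP \<and> Comp G g f \<in> WE GP \<longrightarrow> g \<in> WE GP"
  proof
    assume W: "f \<in> WE GP \<and> Comp G g f \<in> WE GP"
    have "b i \<in> WE (S i)" if i: "i \<in> Obj I" for i
      using Pc_23a[OF Pc[OF i] lv[OF i]] W fe ge Y2 i by (simp add: GP_simps)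
    thus "g \<in> WE GP" using gb ge Y2 by (simp add: GP_simps)
  qed
  show "g \<in> WE GP \<and> Comp G g f \<in> WE GP \<longrightarrow> f \<in> WE GP"
  proof
    assume W: "g \<in> WE GP \<and> Comp G g f \<in> WE GP"
    have "a i \<in> WE (S i)" if i: "i \<in> Obj I" for i
      using Pc_23b[OF Pc[OF i] lv[OF i]] W fe ge Y2 i by (simp add: GP_simps)
    thus "f \<in> WE GP" using fa fe by (simp add: GP_simps)
  qed
  qed
qed

lemma PcG21: "(\<forall>e. is_terminal G e \<longrightarrow> (\<forall>A\<in>Obj G. \<forall>t\<in>hom G A e. t \<in> Fib GP))"
proof (intro allI impI ballI)
  fix e A t assume e: "is_terminal G e" and A: "A \<in> Obj G" and t: "t \<in> hom G A e"
  obtain tf where tf: "t = (A,e,tf)" "(A,e,tf) \<in> Arr G" using Ghom_triple t by blast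
  have "tf i \<in> Fib (S i)" if i: "i \<in> Obj I" for i
    using Pc_term[OF Pc[OF i] term_lv[OF e i] Gobj_lv[OF A i] GarrD(3)[OF tf(2) i]] .
  thus "t \<in> Fib GP" using tf by (simp add: GP_simps)
qed

lemma PcG24: "(\<forall>f\<in>Fib GP. PM GP f \<in> Fib GP)"
proof
  fix f assume f: "f \<in> Fib GP"
  obtain X Y a where fe: "f = (X,Y,a)" by (cases f)
  have fa: "(X,Y,a) \<in> Arr G" using f fe by (simp add: GP_simps)
  have "PM (S i) (a i) \<in> Fib (S i)" if i: "i \<in> Obj I" for i
    using Pc_P4F[OF Pc[OF i]] f fe i by (simp add: GP_simps)
  thus "PM GP f \<in> Fib GP" using lwfun_arr[OF lwfun_P fa] fe by (simp add: GP_simps)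
qed

lemma PcG25: "(\<forall>f\<in>WE GP. PM GP f \<in> WE GP)"
proof
  fix f assume f: "f \<in> WE GP"
  obtain X Y a where fe: "f = (X,Y,a)" by (cases f)
  have fa: "(X,Y,a) \<in> Arr G" using f fe by (simp add: GP_simps)
  have "PM (S i) (a i) \<in> WE (S i)" if i: "i \<in> Obj I" for i
    using Pc_P4W[OF Pc[OF i]] f fe i by (simp add: GP_simps)
  thus "PM GP f \<in> WE GP" using lwfun_arr[OF lwfun_P fa] fe by (simp add: GP_simps)
qed


lemma PcG22: "(\<forall>A\<in>Obj G. iota GP A \<in> WE GP \<and>
        dl0 GP A \<in> Fib GP \<and> dl0 GP A \<in> WE GP \<and> dl1 GP A \<in> Fib GP \<and> dl1 GP A \<in> WE GP \<and>
        (\<forall>X p1 p2. is_product G A A X p1 p2 \<longrightarrow>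
           (\<forall>h\<in>hom G (PO GP A) X. Comp G p1 h = dl0 GP A \<and> Comp G p2 h = dl1 GP A \<longrightarrow> h \<in> Fib GP)))"
proof (intro ballI conjI allI impI)
  fix A assume A: "A \<in> Obj G"
  have iA: "iota GP A \<in> Arr G" using nat_hom[OF PcG3 A] by (simp add: hom_iff)
  have d0: "dl0 GP A \<in> Arr G" using nat_hom[OF PcG4 A] by (simp add: hom_iff)
  have d1: "dl1 GP A \<in> Arr G" using nat_hom[OF PcG5 A] by (simp add: hom_iff)
  show "iota GP A \<in> WE GP" using iA A by (simp add: GP_simps PcatE(21)[OF Pc] Gobj_lv)
  show "dl0 GP A \<in> Fib GP" using d0 A by (simp add: GP_simps PcatE(22)[OF Pc] Gobj_lv)
  show "dl0 GP A \<in> WE GP" using d0 A by (simp add: GP_simps PcatE(23)[OF Pc] Gobj_lv)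
  show "dl1 GP A \<in> Fib GP" using d1 A by (simp add: GP_simps PcatE(24)[OF Pc] Gobj_lv)
  show "dl1 GP A \<in> WE GP" using d1 A by (simp add: GP_simps PcatE(25)[OF Pc] Gobj_lv)
  fix X p1 p2 h assume P: "is_product G A A X p1 p2" and h: "h \<in> hom G (PO GP A) X"
    and eq: "Comp G p1 h = dl0 GP A \<and> Comp G p2 h = dl1 GP A"
  obtain f1 f2 where ff: "p1 = (X,A,f1)" "p2 = (X,A,f2)" "(X,A,f1) \<in> Arr G" "(X,A,f2) \<in> Arr G"
    and lv: "\<forall>i\<in>Obj I. is_product (C i) (fst A i) (fst A i) (fst X i) (f1 i) (f2 i)"
    using L_prod[OF P] by blast
  have h': "h \<in> hom G (gP A) X" using h by (simp add: GP_simps)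
  obtain hf where hf: "h = (gP A, X, hf)" "(gP A, X, hf) \<in> Arr G" using Ghom_triple[OF h'] by blast
  have "hf i \<in> Fib (S i)" if i: "i \<in> Obj I" for i
  proof (rule Pc_P2prod[OF Pc[OF i] Gobj_lv[OF A i]])
    show "is_product (C i) (fst A i) (fst A i) (fst X i) (f1 i) (f2 i)" using lv i by blast
    show "hf i \<in> hom (C i) (PO (S i) (fst A i)) (fst X i)" using GarrD(3)[OF hf(2) i] i by simp
    show "Comp (C i) (f1 i) (hf i) = dl0 (S i) (fst A i)" using eq ff hf i by (auto simp: GP_simps dest: lw_fun)
    show "Comp (C i) (f2 i) (hf i) = dl1 (S i) (fst A i)" using eq ff hf i by (auto simp: GP_simps dest: lw_fun)
  qed
  thus "h \<in> Fib GP" using hf by (simp add: GP_simps)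
qed

lemma Fib_lv: "(X,Y,f) \<in> Fib GP \<Longrightarrow> i \<in> Obj I \<Longrightarrow> f i \<in> Fib (S i)" by (simp add: GP_simps)
lemma Fib_arr: "(X,Y,f) \<in> Fib GP \<Longrightarrow> (X,Y,f) \<in> Arr G" by (simp add: GP_simps)

lemma pb_ex_lv:
  assumes ua: "(A,D,a) \<in> Arr G" and vb: "(B,D,b) \<in> Fib GP"
  shows "\<And>i. i \<in> Obj I \<Longrightarrow> \<exists>Q q1 q2. is_pullback (C i) (a i) (b i) Q q1 q2"
proof -
  fix i assume i: "i \<in> Obj I"
  show "\<exists>Q q1 q2. is_pullback (C i) (a i) (b i) Q q1 q2"
  proof (rule Pc_P3ex[OF Pc[OF i]])
    show "a i \<in> Arr (C i)" using GarrD(3)[OF ua i] by (simp add: hom_iff)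
    show "b i \<in> Fib (S i)" using Fib_lv[OF vb i] .
    show "Cod (C i) (a i) = Cod (C i) (b i)" using GarrD(3)[OF ua i] GarrD(3)[OF Fib_arr[OF vb] i] by (simp add: hom_iff)
  qed
qed

lemma PcG23: "(\<forall>u v. u \<in> Arr G \<and> v \<in> Fib GP \<and> Cod G u = Cod G v \<longrightarrow>
        (\<exists>Q q1 q2. is_pullback G u v Q q1 q2) \<and>
        (\<forall>Q q1 q2. is_pullback G u v Q q1 q2 \<longrightarrow>
           q1 \<in> Fib GP \<and> (v \<in> WE GP \<longrightarrow> q1 \<in> WE GP) \<and> (u \<in> WE GP \<longrightarrow> q2 \<in> WE GP)))"
proof (intro allI impI)
  fix u v assume H: "u \<in> Arr G \<and> v \<in> Fib GP \<and> Cod G u = Cod G v"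
  obtain A D a where ue: "u = (A,D,a)" by (cases u)
  obtain B D2 b where ve: "v = (B,D2,b)" by (cases v)
  have D2: "D2 = D" using H ue ve by simp
  have ua: "(A,D,a) \<in> Arr G" and vF: "(B,D,b) \<in> Fib GP" using H ue ve D2 by auto
  note vb = Fib_arr[OF vF]
  note ex = pb_ex_lv[OF ua vF]
  show "(\<exists>Q q1 q2. is_pullback G u v Q q1 q2) \<and>
    (\<forall>Q q1 q2. is_pullback G u v Q q1 q2 \<longrightarrow> q1 \<in> Fib GP \<and> (v \<in> WE GP \<longrightarrow> q1 \<in> WE GP) \<and> (u \<in> WE GP \<longrightarrow> q2 \<in> WE GP))"
  proof (intro conjI allI impI)
    show "\<exists>Q q1 q2. is_pullback G u v Q q1 q2" using Pb_pb[OF ua vb ex] ue ve D2 by blast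
  next
    fix Q q1 q2 assume P: "is_pullback G u v Q q1 q2"
    obtain f1 f2 where ff: "q1 = (Q,A,f1)" "q2 = (Q,B,f2)" "(Q,A,f1) \<in> Arr G" "(Q,B,f2) \<in> Arr G"
      and lv: "\<forall>i\<in>Obj I. is_pullback (C i) (a i) (b i) (fst Q i) (f1 i) (f2 i)"
      using L_pb[OF _ ex] P ue ve D2 by blast
    have R: "f1 i \<in> Fib (S i) \<and> (b i \<in> WE (S i) \<longrightarrow> f1 i \<in> WE (S i)) \<and> (a i \<in> WE (S i) \<longrightarrow> f2 i \<in> WE (S i))"
      if i: "i \<in> Obj I" for i
    proof (rule Pc_P3[OF Pc[OF i]])
      show "a i \<in> Arr (C i)" using GarrD(3)[OF ua i] by (simp add: hom_iff)
      show "b i \<in> Fib (S i)" using Fib_lv[OF vF i] .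
      show "Cod (C i) (a i) = Cod (C i) (b i)" using GarrD(3)[OF ua i] GarrD(3)[OF vb i] by (simp add: hom_iff)
      show "is_pullback (C i) (a i) (b i) (fst Q i) (f1 i) (f2 i)" using lv i by blast
    qed
    show "q1 \<in> Fib GP" using R ff by (simp add: GP_simps)
    show "v \<in> WE GP \<Longrightarrow> q1 \<in> WE GP" using R ff ve D2 by (simp add: GP_simps)
    show "u \<in> WE GP \<Longrightarrow> q2 \<in> WE GP" using R ff ue by (simp add: GP_simps)
  qed
qed

lemma PcG26: "(\<forall>u v Q q1 q2. v \<in> Fib GP \<and> is_pullback G u v Q q1 q2 \<longrightarrow>
        is_pullback G (PM GP u) (PM GP v) (PO GP Q) (PM GP q1) (PM GP q2))"
proof (intro allI impI)
  fix u v Q q1 q2 assume H: "v \<in> Fib GP \<and> is_pullback G u v Q q1 q2"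
  obtain A D a where ue: "u = (A,D,a)" by (cases u)
  obtain B D2 b where ve: "v = (B,D2,b)" by (cases v)
  have D2: "D2 = D" using H ue ve by (simp add: is_pullback_def)
  have ua: "(A,D,a) \<in> Arr G" and vF: "(B,D,b) \<in> Fib GP" and Q: "Q \<in> Obj G"
    using H ue ve D2 by (auto simp: is_pullback_def)
  note vb = Fib_arr[OF vF]
  note ex = pb_ex_lv[OF ua vF]
  obtain f1 f2 where ff: "q1 = (Q,A,f1)" "q2 = (Q,B,f2)" "(Q,A,f1) \<in> Arr G" "(Q,B,f2) \<in> Arr G"
    and lv: "\<forall>i\<in>Obj I. is_pullback (C i) (a i) (b i) (fst Q i) (f1 i) (f2 i)"
    using L_pb[OF _ ex] H ue ve D2 by blast
  have "is_pullback G (gP A, gP D, lw (Obj I) (\<lambda>i. PM (S i) (a i))) (gP B, gP D, lw (Obj I) (\<lambda>i. PM (S i) (b i)))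
     (gP Q) (gP Q, gP A, lw (Obj I) (\<lambda>i. PM (S i) (f1 i))) (gP Q, gP B, lw (Obj I) (\<lambda>i. PM (S i) (f2 i)))"
  proof (rule R_pb[OF lwfun_arr[OF lwfun_P ua] lwfun_arr[OF lwfun_P vb] gP_obj_in[OF Q]
        lwfun_arr[OF lwfun_P ff(3)] lwfun_arr[OF lwfun_P ff(4)]])
    fix i assume i: "i \<in> Obj I"
    have "is_pullback (C i) (PM (S i) (a i)) (PM (S i) (b i)) (PO (S i) (fst Q i)) (PM (S i) (f1 i)) (PM (S i) (f2 i))"
      using Pc_P4pb[OF Pc[OF i] Fib_lv[OF vF i]] lv i by blast
    thus "is_pullback (C i) (lw (Obj I) (\<lambda>i. PM (S i) (a i)) i) (lw (Obj I) (\<lambda>i. PM (S i) (b i)) i) (fst (gP Q) i)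
        (lw (Obj I) (\<lambda>i. PM (S i) (f1 i)) i) (lw (Obj I) (\<lambda>i. PM (S i) (f2 i)) i)" using i by simp
  qed
  thus "is_pullback G (PM GP u) (PM GP v) (PO GP Q) (PM GP q1) (PM GP q2)"
    using ue ve D2 ff by (simp add: GP_simps)
qed


lemma PcG27: "(\<forall>v\<in>Fib GP. \<forall>AA a1 a2 BB b1 b2 w h Q q1 q2 k.
        is_product G (Dom G v) (Dom G v) AA a1 a2 \<and>
        is_product G (Cod G v) (Cod G v) BB b1 b2 \<and>
        w \<in> hom G AA BB \<and> Comp G b1 w = Comp G v a1 \<and> Comp G b2 w = Comp G v a2 \<and>
        h \<in> hom G (PO GP (Cod G v)) BB \<and> Comp G b1 h = dl0 GP (Cod G v) \<and> Comp G b2 h = dl1 GP (Cod G v) \<and>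
        is_pullback G w h Q q1 q2 \<and>
        k \<in> hom G (PO GP (Dom G v)) Q \<and>
        Comp G a1 (Comp G q1 k) = dl0 GP (Dom G v) \<and> Comp G a2 (Comp G q1 k) = dl1 GP (Dom G v) \<and>
        Comp G q2 k = PM GP v
        \<longrightarrow> k \<in> Fib GP)"
proof (intro ballI allI impI)
  fix v AA a1 a2 BB b1 b2 w h Q q1 q2 k
  assume vF: "v \<in> Fib GP"
  assume H: "is_product G (Dom G v) (Dom G v) AA a1 a2 \<and>
        is_product G (Cod G v) (Cod G v) BB b1 b2 \<and>
        w \<in> hom G AA BB \<and> Comp G b1 w = Comp G v a1 \<and> Comp G b2 w = Comp G v a2 \<and>
        h \<in> hom G (PO GP (Cod G v)) BB \<and> Comp G b1 h = dl0 GP (Cod G v) \<and> Comp G b2 h = dl1 GP (Cod G v) \<and>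
        is_pullback G w h Q q1 q2 \<and>
        k \<in> hom G (PO GP (Dom G v)) Q \<and>
        Comp G a1 (Comp G q1 k) = dl0 GP (Dom G v) \<and> Comp G a2 (Comp G q1 k) = dl1 GP (Dom G v) \<and>
        Comp G q2 k = PM GP v"
  obtain A B vf where ve: "v = (A,B,vf)" by (cases v)
  have vF': "(A,B,vf) \<in> Fib GP" using vF ve by simp
  note va = Fib_arr[OF vF']
  have A: "A \<in> Obj G" and B: "B \<in> Obj G" using GarrD va by auto
  have PA: "is_product G A A AA a1 a2" and PB: "is_product G B B BB b1 b2" using H ve by auto
  obtain fa1 fa2 where fa: "a1 = (AA,A,fa1)" "a2 = (AA,A,fa2)" "(AA,A,fa1) \<in> Arr G" "(AA,A,fa2) \<in> Arr G"
    and lvA: "\<forall>i\<in>Obj I. is_product (C i) (fst A i) (fst A i) (fst AA i) (fa1 i) (fa2 i)"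
    using L_prod[OF PA] by blast
  obtain fb1 fb2 where fb: "b1 = (BB,B,fb1)" "b2 = (BB,B,fb2)" "(BB,B,fb1) \<in> Arr G" "(BB,B,fb2) \<in> Arr G"
    and lvB: "\<forall>i\<in>Obj I. is_product (C i) (fst B i) (fst B i) (fst BB i) (fb1 i) (fb2 i)"
    using L_prod[OF PB] by blast
  have wh: "w \<in> hom G AA BB" using H by blast
  obtain wf where wf: "w = (AA,BB,wf)" "(AA,BB,wf) \<in> Arr G" using Ghom_triple[OF wh] by blast
  have hh: "h \<in> hom G (gP B) BB" using H ve by (simp add: GP_simps)
  obtain hf where hf: "h = (gP B, BB, hf)" "(gP B, BB, hf) \<in> Arr G" using Ghom_triple[OF hh] by blast
  have kh: "k \<in> hom G (gP A) Q" using H ve by (simp add: GP_simps)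
  obtain kf where kf: "k = (gP A, Q, kf)" "(gP A, Q, kf) \<in> Arr G" using Ghom_triple[OF kh] by blast
  have hF: "hf i \<in> Fib (S i)" if i: "i \<in> Obj I" for i
  proof (rule Pc_P2prod[OF Pc[OF i] Gobj_lv[OF B i]])
    show "is_product (C i) (fst B i) (fst B i) (fst BB i) (fb1 i) (fb2 i)" using lvB i by blast
    show "hf i \<in> hom (C i) (PO (S i) (fst B i)) (fst BB i)" using GarrD(3)[OF hf(2) i] i by simp
    show "Comp (C i) (fb1 i) (hf i) = dl0 (S i) (fst B i)" using H ve fb hf i by (auto simp: GP_simps dest: lw_fun)
    show "Comp (C i) (fb2 i) (hf i) = dl1 (S i) (fst B i)" using H ve fb hf i by (auto simp: GP_simps dest: lw_fun)
  qed
  have hFG: "(gP B, BB, hf) \<in> Fib GP" using hf hF by (simp add: GP_simps)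
  have PQ: "is_pullback G (AA,BB,wf) (gP B, BB, hf) Q q1 q2" using H wf hf by simp
  obtain g1 g2 where gg: "q1 = (Q,AA,g1)" "q2 = (Q,gP B,g2)" "(Q,AA,g1) \<in> Arr G" "(Q,gP B,g2) \<in> Arr G"
    and lvQ: "\<forall>i\<in>Obj I. is_pullback (C i) (wf i) (hf i) (fst Q i) (g1 i) (g2 i)"
    using L_pb[OF PQ pb_ex_lv[OF wf(2) hFG]] by blast
  have "kf i \<in> Fib (S i)" if i: "i \<in> Obj I" for i
  proof -
    have vi: "vf i \<in> hom (C i) (fst A i) (fst B i)" using GarrD(3)[OF va i] .
    hence dv: "Dom (C i) (vf i) = fst A i" and cv: "Cod (C i) (vf i) = fst B i" by (auto simp: hom_iff)
    show ?thesis
    proof (rule Pc_P5[OF Pc[OF i] Fib_lv[OF vF' i]], unfold dv cv)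
      show "is_product (C i) (fst A i) (fst A i) (fst AA i) (fa1 i) (fa2 i)" using lvA i by blast
      show "is_product (C i) (fst B i) (fst B i) (fst BB i) (fb1 i) (fb2 i)" using lvB i by blast
      show "wf i \<in> hom (C i) (fst AA i) (fst BB i)" using GarrD(3)[OF wf(2) i] .
      show "Comp (C i) (fb1 i) (wf i) = Comp (C i) (vf i) (fa1 i)" using H ve fa fb wf i by (auto dest: lw_fun)
      show "Comp (C i) (fb2 i) (wf i) = Comp (C i) (vf i) (fa2 i)" using H ve fa fb wf i by (auto dest: lw_fun)
      show "hf i \<in> hom (C i) (PO (S i) (fst B i)) (fst BB i)" using GarrD(3)[OF hf(2) i] i by simp
      show "Comp (C i) (fb1 i) (hf i) = dl0 (S i) (fst B i)" using H ve fb hf i by (auto simp: GP_simps dest: lw_fun)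
      show "Comp (C i) (fb2 i) (hf i) = dl1 (S i) (fst B i)" using H ve fb hf i by (auto simp: GP_simps dest: lw_fun)
      show "is_pullback (C i) (wf i) (hf i) (fst Q i) (g1 i) (g2 i)" using lvQ i by blast
      show "kf i \<in> hom (C i) (PO (S i) (fst A i)) (fst Q i)" using GarrD(3)[OF kf(2) i] i by simp
      show "Comp (C i) (fa1 i) (Comp (C i) (g1 i) (kf i)) = dl0 (S i) (fst A i)"
        using H ve fa gg kf i by (auto simp: GP_simps dest: lw_fun)
      show "Comp (C i) (fa2 i) (Comp (C i) (g1 i) (kf i)) = dl1 (S i) (fst A i)"
        using H ve fa gg kf i by (auto simp: GP_simps dest: lw_fun)
      show "Comp (C i) (g2 i) (kf i) = PM (S i) (vf i)"
        using H ve gg kf i by (auto simp: GP_simps dest: lw_fun)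
    qed
  qed
  thus "k \<in> Fib GP" using kf by (simp add: GP_simps)
qed

lemma G_Pcat: "is_Pcat G GP"
  unfolding is_Pcat_def Let_def
  using PcG0 PcG1 PcG2 PcG3 PcG4 PcG5 PcG6 PcG7 PcG8 PcG9 PcG10 PcG11 PcG12 PcG13 PcG14 PcG15 PcG16
    PcG17 PcG18 PcG19 PcG20 PcG21 PcG22 PcG23 PcG24 PcG25 PcG26 PcG27
  by (intro conjI) assumption+

end


theorem proposition4p6:
  fixes I :: "('i,'u) cat"
    and deg :: "'i \<Rightarrow> nat"
    and C :: "'i \<Rightarrow> ('o,'m) cat"
    and Fo :: "'u \<Rightarrow> 'o \<Rightarrow> 'o"
    and Fm :: "'u \<Rightarrow> 'm \<Rightarrow> 'm"
    and S :: "'i \<Rightarrow> ('o,'m) pstruct"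
  assumes I_cat: "is_category I"
    and I_fin: "finite (Obj I)" "finite (Arr I)"
    and deg_range: "\<forall>i\<in>Obj I. deg i \<in> {0, 1}"
    and deg_mono: "\<forall>u\<in>Arr I. u \<noteq> Idm I (Dom I u) \<longrightarrow> deg (Dom I u) < deg (Cod I u)"
    and C_functor: "\<forall>u\<in>Arr I. is_functor (C (Dom I u)) (C (Cod I u)) (Fo u) (Fm u)"
    and C_id: "\<forall>i\<in>Obj I. (\<forall>A\<in>Obj (C i). Fo (Idm I i) A = A) \<and> (\<forall>f\<in>Arr (C i). Fm (Idm I i) f = f)"
    and C_comp: "\<forall>u v. u \<in> Arr I \<and> v \<in> Arr I \<and> Cod I u = Dom I v \<longrightarrow>
                   (\<forall>A\<in>Obj (C (Dom I u)). Fo (Comp I v u) A = Fo v (Fo u A)) \<and>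
                   (\<forall>f\<in>Arr (C (Dom I u)). Fm (Comp I v u) f = Fm v (Fm u f))"
    and C_Pcat: "\<forall>i\<in>Obj I. is_Pcat (C i) (S i)"
    and u_paths: "\<forall>u\<in>Arr I. preserves_paths (C (Dom I u)) (S (Dom I u)) (S (Cod I u)) (Fo u) (Fm u)"
    and u_fib_we: "\<forall>u\<in>Arr I. preserves_fib_we (S (Dom I u)) (S (Cod I u)) (Fm u)"
    and u_fibprod: "\<forall>u\<in>Arr I. preserves_fibre_products (C (Dom I u)) (S (Dom I u)) (C (Cod I u)) (Fo u) (Fm u)"
  shows "is_Pcat (Gamma I C Fo Fm) (Gamma_P I C Fo Fm S)"
  proof -
  interpret GS I C Fo Fm S
    using I_cat C_functor C_Pcat u_paths by unfold_locales
  show ?thesis using G_Pcat .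
qed

end
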